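(* Let $G$ be finite and $z\in\mathbb C\setminus\{0\}$. The restriction homomorphism $\mathrm{Res}:\mathrm{FA}(P)\to\mathrm{FA}(\partial\mathbb T)$ restricts to a linear isomorphism from $\{\mu\in\mathrm{FA}(P):\mathcal T'\mu=z\mu\}$ onto $\mathrm{FA}(\partial\mathbb T)^{\Gamma,z}:=\{\nu\in\mathrm{FA}(\partial\mathbb T):\pi_z(\gamma)\nu=\nu\ \text{for all }\gamma\in\Gamma\}$.
   Context: $G$ is a finite connected graph with vertex set $V$ (no loops, no multiple edges, every vertex of degree $\ge2$); $E$ oriented edges, $\iota,\tau$, opposite $\bar e$; turn $e\rightsquigarrow e'$ iff $\tau(e)=\iota(e')$, $e'\ne\bar e$. $P$ = infinite paths $(e_1,e_2,\dots)$ with $e_i\rightsquigarrow e_{i+1}$; $(\mathcal Tf)(e_1,\dots)=\sum_{e_0\rightsquigarrow e_1}f(e_0,e_1,\dots)$. Postal codes: finite paths $c=(c_1,\dots,c_m)$, $m\ge1$, $c_i\rightsquigarrow c_{i+1}$; $\mathcal C$ their set; $\mathbf 1_c$ indicator of the district $P_c$ of paths beginning with $c$. $\mathrm{FA}(P)=\{\mu:\mathcal C\to\mathbb C:\mu(c)=\sum_{e:c_m\rightsquigarrow e}\mu(c,e)\}$; for $f$ constant on districts of length $m$, $\langle f,\mu\rangle=\sum_{|c|=m}f(c)\mu(c)$; $(\mathcal T'\mu)(c)=\langle\mathcal T\mathbf 1_c,\mu\rangle$. Universal cover: fix $v_0\in V$; $\mathbb T$ is the tree whose vertices are the non-backtracking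 finite edge paths in $G$ starting at $v_0$ (including the empty path $o$, the base vertex), a path being adjacent to its one-edge extensions; the covering map sends a path to its terminal vertex; $\Gamma=\pi_1(G,v_0)$ acts on $\mathbb T$ by deck transformations. The ends $\partial\mathbb T$ are identified with $P_{v_0}=\{p\in P:\iota(e_1)=v_0\}$; under this identification the forward set of the edge from vertex $c$ to vertex $(c,e)$ is the district $P_{(c,e)}$, and the clopen sets of $\partial\mathbb T$ are the finite disjoint unions of districts $P_c$ with $c$ starting at $v_0$. $\mathrm{FA}(\partial\mathbb T)$ = finitely additive complex set functions on clopen subsets of $\partial\mathbb T$. $\mathrm{Res}\,\mu$ is defined by $(\mathrm{Res}\,\mu)(P_c)=\mu(c)$ for postal codes $c$ starting at $v_0$. With $d$ the tree metric and $h_\omega(x,y)=d(x,w)-d(y,w)$ ($w$ on both rays from $x,y$ to $\omega$): $(\gamma\nu)(A)=\nu(\gamma^{-1}A)$ and $(\pi_z(\gamma)\nu)(A)=\int_Ac_\gamma\,d(\gamma\nu)$ with locally constant $c_\gamma(\omega)=z^{h_\omega(\gamma o,o)}$, integrals of locally constant functions being finite sums over clopen partitions. *)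

theory Defs
  imports Complex_Main
begin

text \<open>The graph is given by a vertex set V and a symmetric irreflexive adjacency relation adj.
  Oriented edges are pairs (u,v) with adj u v; iota = fst, tau = snd.\<close>

definition edges :: "('v \<Rightarrow> 'v \<Rightarrow> bool) \<Rightarrow> ('v \<times> 'v) set" where
  "edges adj = {(u, v). adj u v}"

definition rev_edge :: "'v \<times> 'v \<Rightarrow> 'v \<times> 'v" where
  "rev_edge e = (snd e, fst e)"

definition turn :: "('v \<Rightarrow> 'v \<Rightarrow> bool) \<Rightarrow> 'v \<times> 'v \<Rightarrow> 'v \<times> 'v \<Rightarrow> bool" where
  "turn adj e e' \<longleftrightarrow> e \<in> edges adj \<and> e' \<in> edges adj \<and> snd e = fst e' \<and> e' \<noteq> rev_edge e"

definition paths :: "('v \<Rightarrow> 'v \<Rightarrow> bool) \<Rightarrow> (nat \<Rightarrow> 'v \<times> 'v) set" where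
  "paths adj = {p. \<forall>i. turn adj (p i) (p (Suc i))}"

definition codes :: "('v \<Rightarrow> 'v \<Rightarrow> bool) \<Rightarrow> ('v \<times> 'v) list set" where
  "codes adj = {c. c \<noteq> [] \<and> hd c \<in> edges adj \<and>
                   (\<forall>i. Suc i < length c \<longrightarrow> turn adj (c ! i) (c ! Suc i))}"

definition district :: "('v \<Rightarrow> 'v \<Rightarrow> bool) \<Rightarrow> ('v \<times> 'v) list \<Rightarrow> (nat \<Rightarrow> 'v \<times> 'v) set" where
  "district adj c = {p \<in> paths adj. \<forall>i < length c. p i = c ! i}"

definition indic :: "('v \<Rightarrow> 'v \<Rightarrow> bool) \<Rightarrow> ('v \<times> 'v) list \<Rightarrow> (nat \<Rightarrow> 'v \<times> 'v) \<Rightarrow> complex" where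
  "indic adj c = (\<lambda>p. if p \<in> district adj c then 1 else 0)"

text \<open>Elements of FA(P) are represented as functions on lists of edges that vanish off the
  set of postal codes (so that FA(P) is literally a space of functions on postal codes).\<close>

definition FA_P :: "('v \<Rightarrow> 'v \<Rightarrow> bool) \<Rightarrow> (('v \<times> 'v) list \<Rightarrow> complex) set" where
  "FA_P adj = {\<mu>. (\<forall>c. c \<notin> codes adj \<longrightarrow> \<mu> c = 0) \<and>
     (\<forall>c \<in> codes adj. \<mu> c = (\<Sum>e\<in>{e. turn adj (last c) e}. \<mu> (c @ [e])))}"

definition transfer :: "('v \<Rightarrow> 'v \<Rightarrow> bool) \<Rightarrow> ((nat \<Rightarrow> 'v \<times> 'v) \<Rightarrow> complex) \<Rightarrow>
    (nat \<Rightarrow> 'v \<times> 'v) \<Rightarrow> complex" where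
  "transfer adj f p = (\<Sum>e0\<in>{e. turn adj e (p 0)}. f (case_nat e0 p))"

definition const_on_districts :: "('v \<Rightarrow> 'v \<Rightarrow> bool) \<Rightarrow> nat \<Rightarrow> ((nat \<Rightarrow> 'v \<times> 'v) \<Rightarrow> complex) \<Rightarrow> bool" where
  "const_on_districts adj m f \<longleftrightarrow>
     (\<forall>c \<in> codes adj. length c = m \<longrightarrow> (\<forall>p \<in> district adj c. \<forall>q \<in> district adj c. f p = f q))"

definition pairing :: "('v \<Rightarrow> 'v \<Rightarrow> bool) \<Rightarrow> ((nat \<Rightarrow> 'v \<times> 'v) \<Rightarrow> complex) \<Rightarrow>
    (('v \<times> 'v) list \<Rightarrow> complex) \<Rightarrow> complex" where
  "pairing adj f \<mu> = (let m = (LEAST m. 1 \<le> m \<and> const_on_districts adj m f) in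
      \<Sum>c\<in>{c \<in> codes adj. length c = m}. f (SOME p. p \<in> district adj c) * \<mu> c)"

definition transfer_dual :: "('v \<Rightarrow> 'v \<Rightarrow> bool) \<Rightarrow> (('v \<times> 'v) list \<Rightarrow> complex) \<Rightarrow>
    ('v \<times> 'v) list \<Rightarrow> complex" where
  "transfer_dual adj \<mu> c = (if c \<in> codes adj then pairing adj (transfer adj (indic adj c)) \<mu> else 0)"

definition eigenspace_P :: "('v \<Rightarrow> 'v \<Rightarrow> bool) \<Rightarrow> complex \<Rightarrow> (('v \<times> 'v) list \<Rightarrow> complex) set" where
  "eigenspace_P adj z = {\<mu> \<in> FA_P adj. transfer_dual adj \<mu> = (\<lambda>c. z * \<mu> c)}"

definition bd :: "('v \<Rightarrow> 'v \<Rightarrow> bool) \<Rightarrow> 'v \<Rightarrow> (nat \<Rightarrow> 'v \<times> 'v) set" where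
  "bd adj v0 = {p \<in> paths adj. fst (p 0) = v0}"

definition clopen_bd :: "('v \<Rightarrow> 'v \<Rightarrow> bool) \<Rightarrow> 'v \<Rightarrow> (nat \<Rightarrow> 'v \<times> 'v) set \<Rightarrow> bool" where
  "clopen_bd adj v0 A \<longleftrightarrow> (\<exists>D. finite D \<and> (\<forall>c\<in>D. c \<in> codes adj \<and> fst (hd c) = v0) \<and>
      (\<forall>c\<in>D. \<forall>c'\<in>D. c \<noteq> c' \<longrightarrow> district adj c \<inter> district adj c' = {}) \<and>
      A = \<Union>(district adj ` D))"

text \<open>Finitely additive set functions on clopen sets, represented as functions on all sets of
  paths vanishing off the clopen sets.\<close>
definition FA_bd :: "('v \<Rightarrow> 'v \<Rightarrow> bool) \<Rightarrow> 'v \<Rightarrow> ((nat \<Rightarrow> 'v \<times> 'v) set \<Rightarrow> complex) set" where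
  "FA_bd adj v0 = {\<nu>. (\<forall>A. \<not> clopen_bd adj v0 A \<longrightarrow> \<nu> A = 0) \<and>
     (\<forall>A B. clopen_bd adj v0 A \<longrightarrow> clopen_bd adj v0 B \<longrightarrow> A \<inter> B = {} \<longrightarrow> \<nu> (A \<union> B) = \<nu> A + \<nu> B)}"

definition Res :: "('v \<Rightarrow> 'v \<Rightarrow> bool) \<Rightarrow> 'v \<Rightarrow> (('v \<times> 'v) list \<Rightarrow> complex) \<Rightarrow>
    ((nat \<Rightarrow> 'v \<times> 'v) set \<Rightarrow> complex)" where
  "Res adj v0 \<mu> = (THE \<nu>. \<nu> \<in> FA_bd adj v0 \<and>
      (\<forall>c \<in> codes adj. fst (hd c) = v0 \<longrightarrow> \<nu> (district adj c) = \<mu> c))"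

definition tree_verts :: "('v \<Rightarrow> 'v \<Rightarrow> bool) \<Rightarrow> 'v \<Rightarrow> ('v \<times> 'v) list set" where
  "tree_verts adj v0 = {[]} \<union> {c \<in> codes adj. fst (hd c) = v0}"

fun red :: "('v \<times> 'v) list \<Rightarrow> ('v \<times> 'v) list" where
  "red [] = []"
| "red (e # xs) = (case red xs of [] \<Rightarrow> [e] | f # ys \<Rightarrow> (if f = rev_edge e then ys else e # f # ys))"

text \<open>pi_1(G,v0) as the reduced (non-backtracking) closed edge paths at v0.\<close>
definition Gamma :: "('v \<Rightarrow> 'v \<Rightarrow> bool) \<Rightarrow> 'v \<Rightarrow> ('v \<times> 'v) list set" where
  "Gamma adj v0 = {g \<in> tree_verts adj v0. g = [] \<or> snd (last g) = v0}"

text \<open>Deck transformation of g on tree vertices: reduced concatenation.\<close>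
definition deck_act :: "('v \<times> 'v) list \<Rightarrow> ('v \<times> 'v) list \<Rightarrow> ('v \<times> 'v) list" where
  "deck_act g x = red (g @ x)"

definition pref :: "(nat \<Rightarrow> 'a) \<Rightarrow> nat \<Rightarrow> 'a list" where
  "pref \<omega> n = map \<omega> [0..<n]"

definition lcp :: "'a list \<Rightarrow> 'a list \<Rightarrow> nat" where
  "lcp x y = length (takeWhile (\<lambda>(a, b). a = b) (zip x y))"

text \<open>Extension of the deck action to the ends (= reduced concatenation with an infinite path).\<close>
definition bd_act :: "('v \<times> 'v) list \<Rightarrow> (nat \<Rightarrow> 'v \<times> 'v) \<Rightarrow> (nat \<Rightarrow> 'v \<times> 'v)" where
  "bd_act g \<omega> = (let k = lcp (rev (map rev_edge g)) (pref \<omega> (length g)) in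
      (\<lambda>i. if i < length g - k then g ! i else \<omega> (i - (length g - k) + k)))"

definition tdist :: "'a list \<Rightarrow> 'a list \<Rightarrow> int" where
  "tdist x y = int (length x) + int (length y) - 2 * int (lcp x y)"

text \<open>Vertices on the geodesic ray from tree vertex x to the end omega.\<close>
definition ray :: "'a list \<Rightarrow> (nat \<Rightarrow> 'a) \<Rightarrow> 'a list set" where
  "ray x \<omega> = (let k = lcp x (pref \<omega> (length x)) in
      {take i x | i. k \<le> i \<and> i \<le> length x} \<union> {pref \<omega> n | n. k \<le> n})"

text \<open>Horofunction h_omega(x,y) = d(x,w) - d(y,w), w on both rays to omega.\<close>
definition horo :: "(nat \<Rightarrow> 'a) \<Rightarrow> 'a list \<Rightarrow> 'a list \<Rightarrow> int" where
  "horo \<omega> x y = (let w = (SOME w. w \<in> ray x \<omega> \<inter> ray y \<omega>) in tdist x w - tdist y w)"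

definition fa_push :: "('v \<Rightarrow> 'v \<Rightarrow> bool) \<Rightarrow> 'v \<Rightarrow> ('v \<times> 'v) list \<Rightarrow>
    ((nat \<Rightarrow> 'v \<times> 'v) set \<Rightarrow> complex) \<Rightarrow> ((nat \<Rightarrow> 'v \<times> 'v) set \<Rightarrow> complex)" where
  "fa_push adj v0 g \<nu> A = (if clopen_bd adj v0 A then \<nu> {\<omega> \<in> bd adj v0. bd_act g \<omega> \<in> A} else 0)"

text \<open>Integral of a locally constant function over a clopen set: finite sum over a clopen
  partition of A on whose pieces f is constant.\<close>
definition fa_int :: "('v \<Rightarrow> 'v \<Rightarrow> bool) \<Rightarrow> 'v \<Rightarrow> ((nat \<Rightarrow> 'v \<times> 'v) set \<Rightarrow> complex) \<Rightarrow>
    ((nat \<Rightarrow> 'v \<times> 'v) \<Rightarrow> complex) \<Rightarrow> (nat \<Rightarrow> 'v \<times> 'v) set \<Rightarrow> complex" where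
  "fa_int adj v0 m f A = (SOME s. \<exists>Q. finite Q \<and> (\<forall>B\<in>Q. clopen_bd adj v0 B \<and> B \<noteq> {}) \<and>
      (\<forall>B\<in>Q. \<forall>B'\<in>Q. B \<noteq> B' \<longrightarrow> B \<inter> B' = {}) \<and> \<Union>Q = A \<and>
      (\<forall>B\<in>Q. \<forall>x\<in>B. \<forall>y\<in>B. f x = f y) \<and>
      s = (\<Sum>B\<in>Q. f (SOME x. x \<in> B) * m B))"

definition cocycle :: "complex \<Rightarrow> ('v \<times> 'v) list \<Rightarrow> (nat \<Rightarrow> 'v \<times> 'v) \<Rightarrow> complex" where
  "cocycle z g \<omega> = z powi horo \<omega> (deck_act g []) []"

definition pi_z :: "('v \<Rightarrow> 'v \<Rightarrow> bool) \<Rightarrow> 'v \<Rightarrow> complex \<Rightarrow> ('v \<times> 'v) list \<Rightarrow>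
    ((nat \<Rightarrow> 'v \<times> 'v) set \<Rightarrow> complex) \<Rightarrow> ((nat \<Rightarrow> 'v \<times> 'v) set \<Rightarrow> complex)" where
  "pi_z adj v0 z g \<nu> A = (if clopen_bd adj v0 A then fa_int adj v0 (fa_push adj v0 g \<nu>) (cocycle z g) A else 0)"

definition FA_bd_inv :: "('v \<Rightarrow> 'v \<Rightarrow> bool) \<Rightarrow> 'v \<Rightarrow> complex \<Rightarrow> ((nat \<Rightarrow> 'v \<times> 'v) set \<Rightarrow> complex) set" where
  "FA_bd_inv adj v0 z = {\<nu> \<in> FA_bd adj v0. \<forall>g \<in> Gamma adj v0. pi_z adj v0 z g \<nu> = \<nu>}"

end

theory Submission
  imports Defs
begin


definition einv :: "('v \<times> 'v) list \<Rightarrow> ('v \<times> 'v) list" where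
  "einv d = rev (map rev_edge d)"

lemma rev_edge_rev_edge[simp]: "rev_edge (rev_edge e) = e"
  by (simp add: rev_edge_def)

lemma rev_edge_fst[simp]: "fst (rev_edge e) = snd e" and rev_edge_snd[simp]: "snd (rev_edge e) = fst e"
  by (auto simp: rev_edge_def)

lemma einv_length[simp]: "length (einv d) = length d" by (simp add: einv_def)
lemma einv_inv[simp]: "einv (einv d) = d" by (simp add: einv_def rev_map comp_def)
lemma einv_append: "einv (a @ b) = einv b @ einv a" by (simp add: einv_def)
lemma einv_nth: "i < length d \<Longrightarrow> einv d ! i = rev_edge (d ! (length d - Suc i))"
  by (simp add: einv_def rev_nth)
lemma einv_Nil[simp]: "einv [] = []" by (simp add: einv_def)

fun lcpr :: "'a list \<Rightarrow> 'a list \<Rightarrow> nat" where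
  "lcpr (x # xs) (y # ys) = (if x = y then Suc (lcpr xs ys) else 0)"
| "lcpr _ _ = 0"

lemma lcp_lcpr: "lcp x y = lcpr x y"
  by (induction x y rule: lcpr.induct) (auto simp: lcp_def)

lemma lcpr_le: "lcpr a b \<le> length a" "lcpr a b \<le> length b"
  by (induction a b rule: lcpr.induct) auto

lemma lcpr_nth: "i < lcpr a b \<Longrightarrow> a ! i = b ! i"
proof (induction a b arbitrary: i rule: lcpr.induct)
  case (1 x xs y ys) then show ?case by (cases i) (auto split: if_splits)
qed auto

lemma lcpr_neq: "lcpr a b < length a \<Longrightarrow> lcpr a b < length b \<Longrightarrow> a ! lcpr a b \<noteq> b ! lcpr a b"
  by (induction a b rule: lcpr.induct) auto

lemma lcpr_eqI:
  assumes "k \<le> length a" "k \<le> length b" "\<And>i. i < k \<Longrightarrow> a ! i = b ! i"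
    "k < length a \<Longrightarrow> k < length b \<Longrightarrow> a ! k \<noteq> b ! k"
  shows "lcpr a b = k"
  using assms
proof (induction a b arbitrary: k rule: lcpr.induct)
  case (1 x xs y ys)
  show ?case
  proof (cases k)
    case 0 then show ?thesis using 1 by auto
  next
    case (Suc k')
    have "x = y" using 1(4)[of 0] Suc by auto
    have "lcpr xs ys = k'"
    proof (rule 1(1))
      show "x = y" by fact
      show "k' \<le> length xs" "k' \<le> length ys" using 1(2,3) Suc by auto
      show "xs ! i = ys ! i" if "i < k'" for i using 1(4)[of "Suc i"] that Suc by auto
      show "xs ! k' \<noteq> ys ! k'" if "k' < length xs" "k' < length ys" using 1(5) that Suc by auto
    qed
    then show ?thesis using Suc \<open>x = y\<close> by simp
  qed
qed auto

lemmas lcp_simps = lcp_lcpr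

lemma pref_nth[simp]: "i < n \<Longrightarrow> pref p n ! i = p i" by (simp add: pref_def)
lemma pref_length[simp]: "length (pref p n) = n" by (simp add: pref_def)




locale G =
  fixes V :: "'v set" and adj :: "'v \<Rightarrow> 'v \<Rightarrow> bool" and v0 :: 'v
  assumes finV: "finite V"
    and inV: "\<forall>u v. adj u v \<longrightarrow> u \<in> V \<and> v \<in> V"
    and symm: "\<forall>u v. adj u v \<longrightarrow> adj v u"
    and irr: "\<forall>u. \<not> adj u u"
    and conn: "\<forall>u\<in>V. \<forall>v\<in>V. (u, v) \<in> {(a, b). adj a b}\<^sup>*"
    and deg: "\<forall>v\<in>V. card {w. adj v w} \<ge> 2"
    and v0V: "v0 \<in> V"
begin

abbreviation "E \<equiv> edges adj"
abbreviation "C \<equiv> codes adj"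
abbreviation "P \<equiv> district adj"
abbreviation "trn \<equiv> turn adj"

lemma E_iff: "e \<in> E \<longleftrightarrow> adj (fst e) (snd e)" by (cases e) (auto simp: edges_def)

lemma finite_E: "finite E"
proof -
  have "E \<subseteq> V \<times> V" using inV by (auto simp: edges_def)
  then show ?thesis using finV finite_subset by blast
qed

lemma E_V: "e \<in> E \<Longrightarrow> fst e \<in> V \<and> snd e \<in> V" using inV by (auto simp: E_iff)

lemma rev_E: "e \<in> E \<Longrightarrow> rev_edge e \<in> E" using symm by (auto simp: E_iff)

lemma turn_E: "trn a b \<Longrightarrow> a \<in> E \<and> b \<in> E" by (simp add: turn_def)

lemma turn_rev: assumes "trn a b" shows "trn (rev_edge b) (rev_edge a)"
proof -
  have "a \<in> E" "b \<in> E" "snd a = fst b" "b \<noteq> rev_edge a" using assms by (auto simp: turn_def)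
  then show ?thesis using rev_E unfolding turn_def by (metis rev_edge_fst rev_edge_rev_edge rev_edge_snd)
qed

lemma succ_ex: assumes "e \<in> E" shows "\<exists>e'. trn e e'"
proof -
  let ?v = "snd e"
  have "?v \<in> V" using E_V assms by auto
  then have c: "card {w. adj ?v w} \<ge> 2" using deg by auto
  have "\<exists>w. adj ?v w \<and> w \<noteq> fst e"
  proof (rule ccontr)
    assume "\<not> ?thesis"
    then have "{w. adj ?v w} \<subseteq> {fst e}" by auto
    then have "card {w. adj ?v w} \<le> 1" using card_mono[of "{fst e}"] by fastforce
    then show False using c by auto
  qed
  then obtain w where w: "adj ?v w" "w \<noteq> fst e" by auto
  have "trn e (?v, w)" using w assms by (auto simp: turn_def edges_def rev_edge_def)
  then show ?thesis by blast
qed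

lemma codes_iff: "c \<in> C \<longleftrightarrow> c \<noteq> [] \<and> hd c \<in> E \<and> (\<forall>i. Suc i < length c \<longrightarrow> trn (c!i) (c!Suc i))"
  by (simp add: codes_def)

lemma codes_turn: "c \<in> C \<Longrightarrow> Suc i < length c \<Longrightarrow> trn (c!i) (c!Suc i)"
  by (simp add: codes_def)

lemma codes_nth_E: assumes "c \<in> C" "i < length c" shows "c ! i \<in> E"
proof (cases i)
  case 0 then show ?thesis using assms by (cases c) (auto simp: codes_def)
next
  case (Suc j) then show ?thesis using codes_turn[OF assms(1), of j] assms turn_E by auto
qed

lemma codes_iff2: "c \<in> C \<longleftrightarrow> c \<noteq> [] \<and> (\<forall>i<length c. c ! i \<in> E) \<and> (\<forall>i. Suc i < length c \<longrightarrow> trn (c!i) (c!Suc i))"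
  using codes_nth_E by (auto simp: codes_def hd_conv_nth)

lemma codes_single[simp]: "[e] \<in> C \<longleftrightarrow> e \<in> E" by (simp add: codes_def)

lemma codes_drop: assumes "c \<in> C" "k < length c" shows "drop k c \<in> C"
  using assms unfolding codes_iff2 by (auto simp: add.commute[of k])

lemma codes_take: assumes "c \<in> C" "0 < k" shows "take k c \<in> C"
  using assms unfolding codes_iff2 by auto

lemma codes_tl: assumes "c \<in> C" "2 \<le> length c" shows "tl c \<in> C"
  using codes_drop[OF assms(1), of 1] assms by (simp add: drop_Suc)

lemma codes_append: assumes "a \<in> C" "b \<in> C" "trn (last a) (hd b)" shows "a @ b \<in> C"
  unfolding codes_iff2
proof (intro conjI allI impI)
  show "a @ b \<noteq> []" using assms by (auto simp: codes_def)
  fix i assume "i < length (a @ b)"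
  then show "(a @ b) ! i \<in> E" using assms codes_nth_E by (auto simp: nth_append)
next
  fix i assume i: "Suc i < length (a @ b)"
  have a: "a \<noteq> []" "b \<noteq> []" using assms by (auto simp: codes_def)
  consider "Suc i < length a" | "Suc i = length a" | "Suc i > length a" by linarith
  then show "trn ((a @ b) ! i) ((a @ b) ! Suc i)"
  proof cases
    case 1 then show ?thesis using codes_turn[OF assms(1)] by (auto simp: nth_append)
  next
    case 2
    then have "i = length a - 1" by simp
    then show ?thesis using assms(3) a 2 by (simp add: nth_append last_conv_nth hd_conv_nth)
  next
    case 3 then show ?thesis using codes_turn[OF assms(2), of "i - length a"] i
      by (auto simp: nth_append Suc_diff_le)
  qed
qed

lemma codes_snoc: assumes "c \<in> C" "trn (last c) e" shows "c @ [e] \<in> C"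
  using codes_append[OF assms(1), of "[e]"] assms turn_E by auto

lemma codes_snoc_D: assumes "c @ [e] \<in> C" "c \<noteq> []" shows "c \<in> C" "trn (last c) e"
proof -
  show "c \<in> C" using codes_take[OF assms(1), of "length c"] assms by auto
  have "trn ((c@[e]) ! (length c - 1)) ((c@[e]) ! Suc (length c - 1))"
    using codes_turn[OF assms(1), of "length c - 1"] assms by auto
  then show "trn (last c) e" using assms by (auto simp: nth_append last_conv_nth)
qed

lemma codes_append_D: assumes "a @ b \<in> C" "a \<noteq> []" "b \<noteq> []"
  shows "a \<in> C" "b \<in> C" "trn (last a) (hd b)"
proof -
  show "a \<in> C" using codes_take[OF assms(1), of "length a"] assms by auto
  show "b \<in> C" using codes_drop[OF assms(1), of "length a"] assms by auto
  have "trn ((a@b) ! (length a - 1)) ((a@b) ! Suc (length a - 1))"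
    using codes_turn[OF assms(1), of "length a - 1"] assms by auto
  then show "trn (last a) (hd b)" using assms by (auto simp: nth_append last_conv_nth hd_conv_nth)
qed

lemma codes_inv: assumes "c \<in> C" shows "einv c \<in> C"
  unfolding codes_iff2
proof (intro conjI allI impI)
  show "einv c \<noteq> []" using assms by (auto simp: codes_def einv_def)
  fix i assume "i < length (einv c)"
  then show "einv c ! i \<in> E" using assms codes_nth_E rev_E by (auto simp: einv_nth)
next
  fix i assume i: "Suc i < length (einv c)"
  have "trn (c ! (length c - Suc (Suc i))) (c ! Suc (length c - Suc (Suc i)))"
    using codes_turn[OF assms] i by auto
  moreover have "Suc (length c - Suc (Suc i)) = length c - Suc i" using i by auto
  ultimately show "trn (einv c ! i) (einv c ! Suc i)" using i turn_rev by (auto simp: einv_nth)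
qed

lemma codes_set: "c \<in> C \<Longrightarrow> set c \<subseteq> E"
  by (metis codes_nth_E in_set_conv_nth subsetI)

lemma codes_in_lists: "{c \<in> C. length c = m} \<subseteq> {xs. set xs \<subseteq> E \<and> length xs = m}"
  using codes_set by blast

lemma finite_codes_len: "finite {c \<in> C. length c = m}"
  using finite_subset[OF codes_in_lists finite_lists_length_eq[OF finite_E]] .

lemma finite_succ: "finite {e. trn a e}"
  by (rule finite_subset[OF _ finite_E]) (use turn_E in blast)

lemma paths_turn: "p \<in> paths adj \<Longrightarrow> trn (p i) (p (Suc i))" by (simp add: paths_def)

lemma paths_E: "p \<in> paths adj \<Longrightarrow> p i \<in> E" using paths_turn turn_E by blast

lemma pref_code: assumes "p \<in> paths adj" "0 < n" shows "pref p n \<in> C"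
  unfolding codes_iff2 using assms paths_E paths_turn by (auto simp: pref_def)

lemma district_iff: "p \<in> P c \<longleftrightarrow> p \<in> paths adj \<and> pref p (length c) = c"
  by (auto simp: district_def list_eq_iff_nth_eq)

lemma district_pref: "p \<in> paths adj \<Longrightarrow> 0 < n \<Longrightarrow> p \<in> P (pref p n)"
  by (simp add: district_iff)

lemma pref_take: "m \<le> n \<Longrightarrow> take m (pref p n) = pref p m"
  by (simp add: pref_def take_map)

definition nxt :: "'v \<times> 'v \<Rightarrow> 'v \<times> 'v" where "nxt e = (SOME e'. trn e e')"

lemma nxt: "e \<in> E \<Longrightarrow> trn e (nxt e)" unfolding nxt_def using succ_ex someI_ex by metis

lemma iter_nxt: "e \<in> E \<Longrightarrow> (nxt ^^ k) e \<in> E \<and> trn ((nxt ^^ k) e) ((nxt ^^ Suc k) e)"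
proof (induction k)
  case 0 then show ?case using nxt by simp
next
  case (Suc k)
  then have "(nxt ^^ Suc k) e \<in> E" using turn_E by (metis funpow.simps(2) o_apply)
  then show ?case using nxt by simp
qed

lemma district_ne: assumes "c \<in> C" shows "\<exists>p. p \<in> P c"
proof -
  have ne: "c \<noteq> []" using assms by (auto simp: codes_def)
  have lE: "last c \<in> E" using codes_nth_E[OF assms, of "length c - 1"] ne by (simp add: last_conv_nth)
  define p where "p i = (if i < length c then c ! i else (nxt ^^ (i - (length c - 1))) (last c))" for i
  have p2: "i \<ge> length c - 1 \<Longrightarrow> p i = (nxt ^^ (i - (length c - 1))) (last c)" for i
  proof (cases "i < length c")
    case True
    assume "i \<ge> length c - 1"
    then have "i = length c - 1" using True by simp
    then show ?thesis using ne by (simp add: p_def last_conv_nth)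
  qed (simp add: p_def)
  have "p \<in> paths adj"
    unfolding paths_def
  proof (intro CollectI allI)
    fix i
    show "trn (p i) (p (Suc i))"
    proof (cases "Suc i < length c")
      case True then show ?thesis using codes_turn[OF assms] by (simp add: p_def)
    next
      case False
      then have "p i = (nxt ^^ (i - (length c - 1))) (last c)" "p (Suc i) = (nxt ^^ Suc (i - (length c - 1))) (last c)"
        using p2[of i] p2[of "Suc i"] by (auto simp: Suc_diff_le)
      then show ?thesis using iter_nxt[OF lE] by simp
    qed
  qed
  moreover have "\<forall>i<length c. p i = c ! i" by (simp add: p_def)
  ultimately show ?thesis unfolding district_def by blast
qed

definition pick :: "('v \<times> 'v) list \<Rightarrow> nat \<Rightarrow> 'v \<times> 'v" where "pick c = (SOME p. p \<in> P c)"

lemma pick: "c \<in> C \<Longrightarrow> pick c \<in> P c"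
  unfolding pick_def using district_ne someI_ex by metis

lemma district_sub_iff: assumes "c \<in> C" "c' \<in> C" "length c \<le> length c'"
  shows "P c' \<subseteq> P c \<longleftrightarrow> take (length c) c' = c"
proof
  assume "P c' \<subseteq> P c"
  then have "pick c' \<in> P c" using pick[OF assms(2)] by auto
  then have "pref (pick c') (length c) = c" by (simp add: district_iff)
  moreover have "pref (pick c') (length c') = c'" using pick[OF assms(2)] by (simp add: district_iff)
  ultimately show "take (length c) c' = c" using pref_take[OF assms(3), of "pick c'"] by simp
next
  assume a: "take (length c) c' = c"
  show "P c' \<subseteq> P c"
  proof
    fix p assume "p \<in> P c'"
    then have "p \<in> paths adj" "pref p (length c') = c'" by (auto simp: district_iff)
    then show "p \<in> P c" using pref_take[OF assms(3), of p] a by (simp add: district_iff)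
  qed
qed

lemma district_disj: assumes "length c = length c'" "c \<noteq> c'" shows "P c \<inter> P c' = {}"
  using assms by (auto simp: district_iff)

lemma district_inj: assumes "c \<in> C" "length c = length c'" "P c = P c'" shows "c = c'"
  using district_disj[OF assms(2)] pick[OF assms(1)] assms(3) by blast

end



context G begin

definition "VC = {c \<in> C. fst (hd c) = v0}"
abbreviation "Bd \<equiv> bd adj v0"
definition "lev N A = {c \<in> VC. length c = N \<and> P c \<subseteq> A}"
definition "meas N A \<longleftrightarrow> A = \<Union>(P ` lev N A)"
abbreviation "clop \<equiv> clopen_bd adj v0"

lemma VC_C: "c \<in> VC \<Longrightarrow> c \<in> C" by (simp add: VC_def)
lemma VC_ne: "c \<in> VC \<Longrightarrow> c \<noteq> []" by (simp add: VC_def codes_def)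

lemma finite_VC_len: "finite {c \<in> VC. length c = N}"
  by (rule finite_subset[OF _ finite_codes_len[of N]]) (auto simp: VC_def)

lemma finite_lev: "finite (lev N A)"
  by (rule finite_subset[OF _ finite_VC_len[of N]]) (auto simp: lev_def)

lemma district_Bd: assumes "c \<in> VC" shows "P c \<subseteq> Bd"
proof
  fix p assume p: "p \<in> P c"
  have "c \<noteq> []" using VC_ne assms by auto
  then have "p 0 = hd c" using p by (auto simp: district_def hd_conv_nth)
  then show "p \<in> Bd" using p assms by (auto simp: bd_def VC_def district_def)
qed

lemma pref_VC: assumes "p \<in> Bd" "0 < N" shows "pref p N \<in> VC" "p \<in> P (pref p N)"
proof -
  have "p \<in> paths adj" using assms by (auto simp: bd_def)
  moreover have "hd (pref p N) = p 0" using assms(2) by (simp add: pref_def hd_map upt_conv_Cons)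
  ultimately show "p \<in> P (pref p N)" "pref p N \<in> VC" using assms pref_code district_pref
    by (auto simp: VC_def bd_def)
qed

lemma meas_sub_Bd: "meas N A \<Longrightarrow> A \<subseteq> Bd"
  unfolding meas_def lev_def using district_Bd by blast

lemma lev_pos: "c \<in> lev N A \<Longrightarrow> 0 < N" using VC_ne by (auto simp: lev_def)

lemma meas_point: assumes "meas N A" "x \<in> A" shows "pref x N \<in> lev N A"
proof -
  obtain c where c: "c \<in> lev N A" "x \<in> P c" using assms unfolding meas_def by blast
  then have "length c = N" by (simp add: lev_def)
  then have "pref x N = c" using c by (simp add: district_iff)
  then show ?thesis using c by simp
qed

lemma meas_mono: assumes "meas N A" "N \<le> N'" shows "meas N' A"
  unfolding meas_def
proof
  show "A \<subseteq> \<Union> (P ` lev N' A)"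
  proof
    fix x assume x: "x \<in> A"
    then have c: "pref x N \<in> lev N A" using meas_point assms by blast
    then have N: "0 < N" using lev_pos by blast
    have xB: "x \<in> Bd" using x meas_sub_Bd assms by blast
    have c': "pref x N' \<in> VC" "x \<in> P (pref x N')" using pref_VC[OF xB] N assms by auto
    have "P (pref x N') \<subseteq> P (pref x N)"
      using district_sub_iff[of "pref x N" "pref x N'"] c c' assms(2)
      by (simp add: VC_C lev_def pref_take)
    then have "pref x N' \<in> lev N' A" using c c' by (auto simp: lev_def)
    then show "x \<in> \<Union> (P ` lev N' A)" using c' by blast
  qed
qed (auto simp: lev_def)

lemma meas_cases: assumes "meas N A" "c \<in> VC" "length c = N" shows "P c \<subseteq> A \<or> P c \<inter> A = {}"
proof (rule ccontr)
  assume na: "\<not> (P c \<subseteq> A \<or> P c \<inter> A = {})"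
  then obtain p where p: "p \<in> P c" "p \<in> A" by auto
  then have "pref p N \<in> lev N A" using meas_point assms by blast
  moreover have "pref p N = c" using p assms by (simp add: district_iff)
  ultimately show False using na by (auto simp: lev_def)
qed

lemma meas_of_set: assumes "S \<subseteq> {c \<in> VC. length c = N}" shows "meas N (\<Union>(P ` S))"
  unfolding meas_def
proof
  show "\<Union> (P ` S) \<subseteq> \<Union> (P ` lev N (\<Union> (P ` S)))"
    using assms by (auto simp: lev_def)
qed (auto simp: lev_def)

lemma meas_clop: "clop A \<longleftrightarrow> (\<exists>N. meas N A)"
proof
  assume "\<exists>N. meas N A"
  then obtain N where N: "meas N A" by auto
  show "clop A" unfolding clopen_bd_def
  proof (intro exI conjI)
    show "finite (lev N A)" by (rule finite_lev)
    show "\<forall>c\<in>lev N A. c \<in> C \<and> fst (hd c) = v0" by (auto simp: lev_def VC_def)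
    show "\<forall>c\<in>lev N A. \<forall>c'\<in>lev N A. c \<noteq> c' \<longrightarrow> P c \<inter> P c' = {}"
      by (auto simp: lev_def intro!: district_disj)
    show "A = \<Union> (P ` lev N A)" using N by (simp add: meas_def)
  qed
next
  assume "clop A"
  then obtain D where D: "finite D" "\<forall>c\<in>D. c \<in> C \<and> fst (hd c) = v0" "A = \<Union>(P ` D)"
    unfolding clopen_bd_def by blast
  define N where "N = Max (insert 1 (length ` D))"
  have N: "c \<in> D \<Longrightarrow> length c \<le> N" for c using D by (auto simp: N_def)
  have "meas N A" unfolding meas_def
  proof
    show "A \<subseteq> \<Union> (P ` lev N A)"
    proof
      fix x assume "x \<in> A"
      then obtain c where c: "c \<in> D" "x \<in> P c" using D by auto
      have cV: "c \<in> VC" using c D by (auto simp: VC_def)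
      have xB: "x \<in> Bd" using district_Bd cV c by auto
      have "1 \<le> N" unfolding N_def using D(1) by (intro Max_ge) auto
      then have N0: "0 < N" by simp
      have c': "pref x N \<in> VC" "x \<in> P (pref x N)" using pref_VC[OF xB N0] by auto
      have "P (pref x N) \<subseteq> P c"
      proof -
        have "take (length c) (pref x N) = c" using c N[OF c(1)]
          by (simp add: pref_take district_iff)
        then show ?thesis using district_sub_iff[of c "pref x N"] cV c' N[OF c(1)] VC_C by simp
      qed
      then have "pref x N \<in> lev N A" using c' c D by (auto simp: lev_def)
      then show "x \<in> \<Union> (P ` lev N A)" using c' by blast
    qed
  qed (auto simp: lev_def)
  then show "\<exists>N. meas N A" by blast
qed

lemma meas_Un: assumes "meas N A" "meas N B"
  shows "meas N (A \<union> B)" "lev N (A \<union> B) = lev N A \<union> lev N B"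
proof -
  show l: "lev N (A \<union> B) = lev N A \<union> lev N B"
  proof
    show "lev N (A \<union> B) \<subseteq> lev N A \<union> lev N B"
    proof
      fix c assume c: "c \<in> lev N (A \<union> B)"
      then have cV: "c \<in> VC" "length c = N" by (auto simp: lev_def)
      obtain p where p: "p \<in> P c" using pick VC_C cV by blast
      then have "p \<in> A \<or> p \<in> B" using c by (auto simp: lev_def)
      then have "P c \<subseteq> A \<or> P c \<subseteq> B" using meas_cases[OF assms(1) cV] meas_cases[OF assms(2) cV] p by blast
      then show "c \<in> lev N A \<union> lev N B" using cV by (auto simp: lev_def)
    qed
  qed (auto simp: lev_def)
  show "meas N (A \<union> B)" using assms l unfolding meas_def by auto
qed

lemma meas_empty: "meas N {}"
  unfolding meas_def lev_def using pick VC_C by blast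

lemma clop_empty: "clop {}" using meas_clop meas_empty by blast

lemma meas_district: assumes "c \<in> VC" shows "meas (length c) (P c)" "lev (length c) (P c) = {c}"
proof -
  show l: "lev (length c) (P c) = {c}"
  proof
    show "lev (length c) (P c) \<subseteq> {c}"
    proof
      fix c' assume "c' \<in> lev (length c) (P c)"
      then have "c' \<in> VC" "length c' = length c" "P c' \<subseteq> P c" by (auto simp: lev_def)
      then show "c' \<in> {c}" using district_sub_iff[of c c'] assms VC_C by auto
    qed
  qed (use assms in \<open>auto simp: lev_def\<close>)
  show "meas (length c) (P c)" unfolding meas_def l by simp
qed

lemma clop_district: "c \<in> VC \<Longrightarrow> clop (P c)" using meas_district meas_clop by blast

lemma clop_Un: "clop A \<Longrightarrow> clop B \<Longrightarrow> clop (A \<union> B)"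
proof -
  assume "clop A" "clop B"
  then obtain N1 N2 where "meas N1 A" "meas N2 B" using meas_clop by blast
  then have "meas (max N1 N2) A" "meas (max N1 N2) B" using meas_mono by (auto)
  then show ?thesis using meas_Un meas_clop by blast
qed

lemma clop_meas_common: assumes "clop A" "clop B" obtains N where "meas N A" "meas N B"
proof -
  obtain N1 N2 where "meas N1 A" "meas N2 B" using meas_clop assms by blast
  then have "meas (max N1 N2) A" "meas (max N1 N2) B" using meas_mono by auto
  then show ?thesis using that by blast
qed

lemma clop_meas_ge: assumes "clop A" obtains N where "meas N A" "N \<ge> K"
proof -
  obtain N1 where "meas N1 A" using meas_clop assms by blast
  then have "meas (max N1 K) A" using meas_mono by auto
  then show ?thesis using that by (meson max.cobounded2)
qed

lemma FA_bd_zero: "\<nu> \<in> FA_bd adj v0 \<Longrightarrow> \<not> clop A \<Longrightarrow> \<nu> A = 0" by (simp add: FA_bd_def)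
lemma FA_bd_add: "\<nu> \<in> FA_bd adj v0 \<Longrightarrow> clop A \<Longrightarrow> clop B \<Longrightarrow> A \<inter> B = {} \<Longrightarrow> \<nu> (A \<union> B) = \<nu> A + \<nu> B"
  by (simp add: FA_bd_def)

lemma FA_bd_empty: assumes "\<nu> \<in> FA_bd adj v0" shows "\<nu> {} = 0"
  using FA_bd_add[OF assms clop_empty clop_empty] by simp

lemma FA_bd_sum_set: assumes "\<nu> \<in> FA_bd adj v0" "S \<subseteq> {c \<in> VC. length c = N}"
  shows "\<nu> (\<Union>(P ` S)) = (\<Sum>c\<in>S. \<nu> (P c))"
proof -
  have "finite S" using finite_subset[OF assms(2) finite_VC_len] .
  then show ?thesis using assms(2)
  proof (induction S rule: finite_induct)
    case empty then show ?case using FA_bd_empty[OF assms(1)] by simp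
  next
    case (insert c S)
    have "clop (P c)" using clop_district insert by auto
    moreover have "clop (\<Union>(P ` S))" using meas_of_set[of S N] insert meas_clop by auto
    moreover have "P c \<inter> \<Union>(P ` S) = {}" using insert district_disj by auto
    ultimately have "\<nu> (P c \<union> \<Union>(P ` S)) = \<nu> (P c) + \<nu> (\<Union>(P ` S))" using FA_bd_add[OF assms(1)] by blast
    then show ?case using insert by simp
  qed
qed

lemma FA_bd_sum: assumes "\<nu> \<in> FA_bd adj v0" "meas N A"
  shows "\<nu> A = (\<Sum>c\<in>lev N A. \<nu> (P c))"
proof -
  have "\<nu> A = \<nu> (\<Union>(P ` lev N A))" using assms(2) meas_def by metis
  also have "\<dots> = (\<Sum>c\<in>lev N A. \<nu> (P c))" by (rule FA_bd_sum_set[OF assms(1), of _ N]) (auto simp: lev_def)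
  finally show ?thesis .
qed

lemma FA_bd_unique: assumes "\<nu>1 \<in> FA_bd adj v0" "\<nu>2 \<in> FA_bd adj v0" "\<forall>c\<in>VC. \<nu>1 (P c) = \<nu>2 (P c)"
  shows "\<nu>1 = \<nu>2"
proof
  fix A show "\<nu>1 A = \<nu>2 A"
  proof (cases "clop A")
    case True
    then obtain N where N: "meas N A" using meas_clop by blast
    have "(\<Sum>c\<in>lev N A. \<nu>1 (P c)) = (\<Sum>c\<in>lev N A. \<nu>2 (P c))"
      by (rule sum.cong) (use assms(3) in \<open>auto simp: lev_def\<close>)
    then show ?thesis using FA_bd_sum[OF assms(1) N] FA_bd_sum[OF assms(2) N] by simp
  next
    case False then show ?thesis using FA_bd_zero[OF assms(1) False] FA_bd_zero[OF assms(2) False] by simp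
  qed
qed

lemma lev_Suc: assumes "meas N A"
  shows "lev (Suc N) A = (\<lambda>(c, e). c @ [e]) ` Sigma (lev N A) (\<lambda>c. {e. trn (last c) e})"
proof
  show "lev (Suc N) A \<subseteq> (\<lambda>(c, e). c @ [e]) ` Sigma (lev N A) (\<lambda>c. {e. trn (last c) e})"
  proof
    fix c' assume c': "c' \<in> lev (Suc N) A"
    then have c'V: "c' \<in> VC" "length c' = Suc N" "P c' \<subseteq> A" by (auto simp: lev_def)
    obtain p where p: "p \<in> P c'" using pick VC_C c'V by blast
    then have "p \<in> A" using c'V by auto
    then have "pref p N \<in> lev N A" using meas_point assms by blast
    then have N0: "0 < N" using lev_pos by blast
    define c where "c = butlast c'"
    define e where "e = last c'"
    have ce: "c' = c @ [e]" using c'V VC_ne by (simp add: c_def e_def)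
    have lc: "length c = N" using c'V by (simp add: c_def)
    then have cne: "c \<noteq> []" using N0 by auto
    have cC: "c \<in> C" "trn (last c) e" using codes_snoc_D[of c e] ce c'V VC_C cne by auto
    have cV: "c \<in> VC" using cC c'V ce cne by (auto simp: VC_def)
    have "P c' \<subseteq> P c" using district_sub_iff[of c c'] cC c'V ce VC_C by simp
    then have "P c \<subseteq> A" using meas_cases[OF assms cV lc] p c'V by blast
    then have cl: "c \<in> lev N A" using cV lc by (simp add: lev_def)
    show "c' \<in> (\<lambda>(c, e). c @ [e]) ` Sigma (lev N A) (\<lambda>c. {e. trn (last c) e})"
      unfolding image_iff by (intro bexI[of _ "(c, e)"]) (use ce cC cl in auto)
  qed
next
  show "(\<lambda>(c, e). c @ [e]) ` Sigma (lev N A) (\<lambda>c. {e. trn (last c) e}) \<subseteq> lev (Suc N) A"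
  proof clarify
    fix c e assume c: "c \<in> lev N A" "trn (last c) e"
    then have cV: "c \<in> VC" "length c = N" "P c \<subseteq> A" by (auto simp: lev_def)
    have "c @ [e] \<in> C" using codes_snoc c VC_C cV by blast
    then have ceV: "c @ [e] \<in> VC" using cV VC_ne by (auto simp: VC_def)
    have "P (c @ [e]) \<subseteq> P c" using district_sub_iff[of c "c @ [e]"] ceV cV VC_C by simp
    then show "c @ [e] \<in> lev (Suc N) A" using ceV cV by (auto simp: lev_def)
  qed
qed

lemma sum_lev_Suc:
  assumes "meas N A" "\<forall>c\<in>VC. \<phi> c = (\<Sum>e\<in>{e. trn (last c) e}. \<phi> (c @ [e]))"
  shows "(\<Sum>c\<in>lev (Suc N) A. \<phi> c) = (\<Sum>c\<in>lev N A. \<phi> c)"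
proof -
  have inj: "inj_on (\<lambda>(c, e). c @ [e]) (Sigma (lev N A) (\<lambda>c. {e. trn (last c) e}))"
    by (auto simp: inj_on_def)
  have "(\<Sum>c\<in>lev (Suc N) A. \<phi> c) = (\<Sum>x\<in>Sigma (lev N A) (\<lambda>c. {e. trn (last c) e}). \<phi> ((\<lambda>(c, e). c @ [e]) x))"
    unfolding lev_Suc[OF assms(1)] by (rule sum.reindex[OF inj, unfolded comp_def])
  also have "\<dots> = (\<Sum>c\<in>lev N A. \<Sum>e\<in>{e. trn (last c) e}. \<phi> (c @ [e]))"
    by (subst sum.Sigma) (simp_all add: finite_lev finite_succ prod.case_distrib)
  also have "\<dots> = (\<Sum>c\<in>lev N A. \<phi> c)"
  proof (rule sum.cong)
    fix c assume "c \<in> lev N A"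
    then have "c \<in> VC" by (simp add: lev_def)
    then show "(\<Sum>e\<in>{e. trn (last c) e}. \<phi> (c @ [e])) = \<phi> c" using assms(2) by metis
  qed simp
  finally show ?thesis .
qed

lemma sum_lev_mono:
  assumes "meas N A" "N \<le> N'" "\<forall>c\<in>VC. \<phi> c = (\<Sum>e\<in>{e. trn (last c) e}. \<phi> (c @ [e]))"
  shows "(\<Sum>c\<in>lev N' A. \<phi> c) = (\<Sum>c\<in>lev N A. \<phi> c)"
  using assms(2)
proof (induction N' rule: dec_induct)
  case (step n)
  have "meas n A" using meas_mono[OF assms(1)] step(1) by simp
  from sum_lev_Suc[OF this assms(3)] step(3) show ?case by simp
qed simp

lemma FA_bd_exists:
  assumes "\<forall>c\<in>VC. \<phi> c = (\<Sum>e\<in>{e. trn (last c) e}. \<phi> (c @ [e]))"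
  shows "\<exists>\<nu>\<in>FA_bd adj v0. \<forall>c\<in>VC. \<nu> (P c) = \<phi> c"
proof -
  define \<nu> where "\<nu> A = (if clop A then (\<Sum>c\<in>lev (LEAST N. meas N A) A. \<phi> c) else 0)" for A
  have key: "\<nu> A = (\<Sum>c\<in>lev N A. \<phi> c)" if "meas N A" for N A
  proof -
    have cl: "clop A" using that meas_clop by blast
    have L: "meas (LEAST N. meas N A) A" using that by (rule LeastI)
    have "(LEAST N. meas N A) \<le> N" using that by (rule Least_le)
    from sum_lev_mono[OF L this assms] cl show ?thesis by (simp add: \<nu>_def)
  qed
  have "\<nu> \<in> FA_bd adj v0" unfolding FA_bd_def
  proof (intro CollectI conjI allI impI)
    fix A assume "\<not> clop A" then show "\<nu> A = 0" by (simp add: \<nu>_def)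
  next
    fix A B assume ab: "clop A" "clop B" "A \<inter> B = {}"
    obtain N where N: "meas N A" "meas N B" using clop_meas_common ab by blast
    have d: "lev N A \<inter> lev N B = {}"
    proof (rule equals0I)
      fix c assume "c \<in> lev N A \<inter> lev N B"
      then have c: "c \<in> VC" "P c \<subseteq> A" "P c \<subseteq> B" by (auto simp: lev_def)
      then show False using pick[OF VC_C[OF c(1)]] ab(3) by blast
    qed
    have "\<nu> (A \<union> B) = (\<Sum>c\<in>lev N A \<union> lev N B. \<phi> c)" using key[OF meas_Un(1)[OF N]] meas_Un(2)[OF N] by simp
    also have "\<dots> = (\<Sum>c\<in>lev N A. \<phi> c) + (\<Sum>c\<in>lev N B. \<phi> c)"
      by (rule sum.union_disjoint) (auto simp: finite_lev d)
    finally show "\<nu> (A \<union> B) = \<nu> A + \<nu> B" using key[OF N(1)] key[OF N(2)] by simp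
  qed
  moreover have "\<forall>c\<in>VC. \<nu> (P c) = \<phi> c"
  proof
    fix c assume "c \<in> VC"
    from key[OF meas_district(1)[OF this]] meas_district(2)[OF this] show "\<nu> (P c) = \<phi> c" by simp
  qed
  ultimately show ?thesis by blast
qed

end



context G begin

lemma FA_P_zero: "\<mu> \<in> FA_P adj \<Longrightarrow> c \<notin> C \<Longrightarrow> \<mu> c = 0" by (simp add: FA_P_def)
lemma FA_P_add: "\<mu> \<in> FA_P adj \<Longrightarrow> c \<in> C \<Longrightarrow> \<mu> c = (\<Sum>e\<in>{e. trn (last c) e}. \<mu> (c @ [e]))"
  by (simp add: FA_P_def)

lemma Res_eq: assumes "\<nu> \<in> FA_bd adj v0" "\<forall>c\<in>VC. \<nu> (P c) = \<mu> c" shows "Res adj v0 \<mu> = \<nu>"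
  unfolding Res_def
proof (rule the_equality)
  show "\<nu> \<in> FA_bd adj v0 \<and> (\<forall>c\<in>C. fst (hd c) = v0 \<longrightarrow> \<nu> (P c) = \<mu> c)" using assms by (auto simp: VC_def)
  fix \<nu>' assume "\<nu>' \<in> FA_bd adj v0 \<and> (\<forall>c\<in>C. fst (hd c) = v0 \<longrightarrow> \<nu>' (P c) = \<mu> c)"
  then show "\<nu>' = \<nu>" using FA_bd_unique[of \<nu>' \<nu>] assms by (auto simp: VC_def)
qed

lemma Res: assumes "\<mu> \<in> FA_P adj" shows "Res adj v0 \<mu> \<in> FA_bd adj v0" "\<forall>c\<in>VC. Res adj v0 \<mu> (P c) = \<mu> c"
proof -
  have "\<forall>c\<in>VC. \<mu> c = (\<Sum>e\<in>{e. trn (last c) e}. \<mu> (c @ [e]))" using FA_P_add[OF assms] VC_C by blast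
  then obtain \<nu> where n1: "\<nu> \<in> FA_bd adj v0" and n2: "\<forall>c\<in>VC. \<nu> (P c) = \<mu> c" using FA_bd_exists by blast
  then have "Res adj v0 \<mu> = \<nu>" by (rule Res_eq)
  then show "Res adj v0 \<mu> \<in> FA_bd adj v0" "\<forall>c\<in>VC. Res adj v0 \<mu> (P c) = \<mu> c" using n1 n2 by auto
qed

definition "CL m = {c \<in> C. length c = m}"

lemma finite_CL: "finite (CL m)" using finite_codes_len by (simp add: CL_def)

lemma pairing_sum_def: "pairing adj f \<mu> = (\<Sum>c\<in>CL (LEAST m. 1 \<le> m \<and> const_on_districts adj m f). f (pick c) * \<mu> c)"
  by (simp add: pairing_def CL_def pick_def Let_def)

lemma cod_Suc: assumes "const_on_districts adj m f" "1 \<le> m" shows "const_on_districts adj (Suc m) f"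
  unfolding const_on_districts_def
proof (intro ballI impI)
  fix c' p q assume c': "c' \<in> C" "length c' = Suc m" and pq: "p \<in> P c'" "q \<in> P c'"
  have tC: "take m c' \<in> C" using codes_take[OF c'(1)] assms(2) by auto
  have "P c' \<subseteq> P (take m c')" using district_sub_iff[OF tC c'(1)] c' by simp
  then have pq': "p \<in> P (take m c')" "q \<in> P (take m c')" using pq by auto
  have H: "\<And>c p q. c \<in> C \<Longrightarrow> length c = m \<Longrightarrow> p \<in> P c \<Longrightarrow> q \<in> P c \<Longrightarrow> f p = f q"
    using assms(1) unfolding const_on_districts_def by blast
  have "length (take m c') = m" using c' by simp
  from H[OF tC this pq'] show "f p = f q" .
qed

lemma CL_Suc: assumes "1 \<le> m"
  shows "CL (Suc m) = (\<lambda>(c, e). c @ [e]) ` Sigma (CL m) (\<lambda>c. {e. trn (last c) e})"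
proof
  show "CL (Suc m) \<subseteq> (\<lambda>(c, e). c @ [e]) ` Sigma (CL m) (\<lambda>c. {e. trn (last c) e})"
  proof
    fix c' assume "c' \<in> CL (Suc m)"
    then have c': "c' \<in> C" "length c' = Suc m" by (auto simp: CL_def)
    define c where "c = butlast c'"
    define e where "e = last c'"
    have "c' \<noteq> []" using c' by auto
    then have ce: "c' = c @ [e]" by (simp add: c_def e_def)
    have lc: "length c = m" using c' by (simp add: c_def)
    then have cne: "c \<noteq> []" using assms by auto
    have cC: "c \<in> C" "trn (last c) e" using codes_snoc_D[of c e] ce c' cne by auto
    have cl: "c \<in> CL m" using cC lc by (simp add: CL_def)
    show "c' \<in> (\<lambda>(c, e). c @ [e]) ` Sigma (CL m) (\<lambda>c. {e. trn (last c) e})"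
      unfolding image_iff by (intro bexI[of _ "(c, e)"]) (use ce cC cl in auto)
  qed
next
  show "(\<lambda>(c, e). c @ [e]) ` Sigma (CL m) (\<lambda>c. {e. trn (last c) e}) \<subseteq> CL (Suc m)"
    using codes_snoc by (auto simp: CL_def)
qed

lemma pairing_step:
  assumes "\<mu> \<in> FA_P adj" "const_on_districts adj m f" "1 \<le> m"
  shows "(\<Sum>c\<in>CL (Suc m). f (pick c) * \<mu> c) = (\<Sum>c\<in>CL m. f (pick c) * \<mu> c)"
proof -
  have inj: "inj_on (\<lambda>(c, e). c @ [e]) (Sigma (CL m) (\<lambda>c. {e. trn (last c) e}))"
    by (auto simp: inj_on_def)
  have fe: "f (pick (c @ [e])) = f (pick c)" if "c \<in> CL m" "trn (last c) e" for c e
  proof -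
    have cC: "c \<in> C" "length c = m" using that by (auto simp: CL_def)
    have ceC: "c @ [e] \<in> C" using codes_snoc cC that by blast
    have "P (c @ [e]) \<subseteq> P c" using district_sub_iff[OF cC(1) ceC] by simp
    then have "pick (c @ [e]) \<in> P c" using pick[OF ceC] by blast
    have H: "\<And>c p q. c \<in> C \<Longrightarrow> length c = m \<Longrightarrow> p \<in> P c \<Longrightarrow> q \<in> P c \<Longrightarrow> f p = f q"
      using assms(2) unfolding const_on_districts_def by blast
    from H[OF cC(1) cC(2) \<open>pick (c @ [e]) \<in> P c\<close> pick[OF cC(1)]] show ?thesis .
  qed
  have "(\<Sum>c\<in>CL (Suc m). f (pick c) * \<mu> c) = (\<Sum>x\<in>Sigma (CL m) (\<lambda>c. {e. trn (last c) e}). f (pick ((\<lambda>(c, e). c @ [e]) x)) * \<mu> ((\<lambda>(c, e). c @ [e]) x))"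
    unfolding CL_Suc[OF assms(3)] by (rule sum.reindex[OF inj, unfolded comp_def])
  also have "\<dots> = (\<Sum>(c, e)\<in>Sigma (CL m) (\<lambda>c. {e. trn (last c) e}). f (pick (c @ [e])) * \<mu> (c @ [e]))"
    by (rule sum.cong) auto
  also have "\<dots> = (\<Sum>c\<in>CL m. \<Sum>e\<in>{e. trn (last c) e}. f (pick (c @ [e])) * \<mu> (c @ [e]))"
    by (rule sum.Sigma[symmetric]) (simp_all add: finite_CL finite_succ)
  also have "\<dots> = (\<Sum>c\<in>CL m. f (pick c) * \<mu> c)"
  proof (rule sum.cong)
    fix c assume c: "c \<in> CL m"
    have "(\<Sum>e\<in>{e. trn (last c) e}. f (pick (c @ [e])) * \<mu> (c @ [e])) = (\<Sum>e\<in>{e. trn (last c) e}. f (pick c) * \<mu> (c @ [e]))"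
      using fe[OF c] by simp
    also have "\<dots> = f (pick c) * (\<Sum>e\<in>{e. trn (last c) e}. \<mu> (c @ [e]))" by (simp add: sum_distrib_left)
    also have "\<dots> = f (pick c) * \<mu> c" using FA_P_add[OF assms(1), of c] c by (simp add: CL_def)
    finally show "(\<Sum>e\<in>{e. trn (last c) e}. f (pick (c @ [e])) * \<mu> (c @ [e])) = f (pick c) * \<mu> c" .
  qed simp
  finally show ?thesis .
qed

lemma pairing_eq:
  assumes "\<mu> \<in> FA_P adj" "const_on_districts adj m f" "1 \<le> m"
  shows "pairing adj f \<mu> = (\<Sum>c\<in>CL m. f (pick c) * \<mu> c)"
proof -
  define m0 where "m0 = (LEAST m. 1 \<le> m \<and> const_on_districts adj m f)"
  have L: "1 \<le> m0 \<and> const_on_districts adj m0 f" unfolding m0_def by (rule LeastI[of _ m]) (use assms in auto)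
  have le: "m0 \<le> m" unfolding m0_def by (rule Least_le) (use assms in auto)
  have K: "m0 \<le> k \<Longrightarrow> 1 \<le> k \<and> const_on_districts adj k f \<and> (\<Sum>c\<in>CL k. f (pick c) * \<mu> c) = (\<Sum>c\<in>CL m0. f (pick c) * \<mu> c)" for k
  proof (induction k rule: dec_induct)
    case base then show ?case using L by simp
  next
    case (step n)
    then have n: "1 \<le> n" "const_on_districts adj n f" by auto
    have "const_on_districts adj (Suc n) f" using cod_Suc[OF n(2) n(1)] .
    moreover have "(\<Sum>c\<in>CL (Suc n). f (pick c) * \<mu> c) = (\<Sum>c\<in>CL n. f (pick c) * \<mu> c)"
      using pairing_step[OF assms(1) n(2) n(1)] .
    ultimately show ?case using step(3) by simp
  qed
  have "(\<Sum>c\<in>CL m. f (pick c) * \<mu> c) = (\<Sum>c\<in>CL m0. f (pick c) * \<mu> c)" using K[OF le] by blast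
  moreover have "pairing adj f \<mu> = (\<Sum>c\<in>CL m0. f (pick c) * \<mu> c)" unfolding pairing_sum_def m0_def ..
  ultimately show ?thesis by simp
qed

lemma finite_pred: "finite {e. trn e b}"
  by (rule finite_subset[OF _ finite_E]) (use turn_E in blast)

lemma case_nat_paths: assumes "p \<in> paths adj" "trn e0 (p 0)" shows "case_nat e0 p \<in> paths adj"
  unfolding paths_def
proof (intro CollectI allI)
  fix i show "trn (case_nat e0 p i) (case_nat e0 p (Suc i))"
    using assms paths_turn by (cases i) auto
qed

lemma transfer_long:
  assumes "c \<in> C" "2 \<le> length c" "p \<in> paths adj"
  shows "transfer adj (indic adj c) p = indic adj (tl c) p"
proof -
  have mem: "indic adj c (case_nat e0 p) = (if e0 = c ! 0 \<and> p \<in> P (tl c) then 1 else 0)"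
    if "trn e0 (p 0)" for e0
  proof -
    have "case_nat e0 p \<in> P c \<longleftrightarrow> e0 = c ! 0 \<and> (\<forall>i<length c - 1. p i = c ! Suc i)"
    proof -
      have "(\<forall>i<length c. case_nat e0 p i = c ! i) \<longleftrightarrow> e0 = c ! 0 \<and> (\<forall>i<length c - 1. p i = c ! Suc i)"
      proof
        assume a: "\<forall>i<length c. case_nat e0 p i = c ! i"
        show "e0 = c ! 0 \<and> (\<forall>i<length c - 1. p i = c ! Suc i)"
        proof
          have "c \<noteq> []" using assms(2) by auto
          then show "e0 = c ! 0" using a[rule_format, of 0] by simp
          show "\<forall>i<length c - 1. p i = c ! Suc i" using a[rule_format, of "Suc _"] by auto
        qed
      next
        assume a: "e0 = c ! 0 \<and> (\<forall>i<length c - 1. p i = c ! Suc i)"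
        show "\<forall>i<length c. case_nat e0 p i = c ! i"
        proof (intro allI impI)
          fix i assume "i < length c" then show "case_nat e0 p i = c ! i" using a by (cases i) auto
        qed
      qed
      then show ?thesis using case_nat_paths[OF assms(3) that] by (simp add: district_def)
    qed
    moreover have "p \<in> P (tl c) \<longleftrightarrow> (\<forall>i<length c - 1. p i = c ! Suc i)"
      using assms(3) by (simp add: district_def nth_tl)
    ultimately show ?thesis by (simp add: indic_def)
  qed
  have "transfer adj (indic adj c) p = (\<Sum>e0\<in>{e. trn e (p 0)}. (if e0 = c ! 0 \<and> p \<in> P (tl c) then 1 else 0))"
    unfolding transfer_def by (rule sum.cong) (auto simp: mem)
  also have "\<dots> = (if p \<in> P (tl c) then 1 else 0)"
  proof (cases "p \<in> P (tl c)")
    case True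
    then have "p 0 = c ! 1" using assms(2) by (simp add: district_def nth_tl)
    then have "trn (c ! 0) (p 0)" using codes_turn[OF assms(1), of 0] assms(2) by simp
    then show ?thesis using True finite_pred by (simp add: sum.delta)
  qed simp
  finally show ?thesis by (simp add: indic_def)
qed

lemma transfer_one:
  assumes "p \<in> paths adj"
  shows "transfer adj (indic adj [a]) p = (if trn a (p 0) then 1 else 0)"
proof -
  have mem: "indic adj [a] (case_nat e0 p) = (if e0 = a then 1 else 0)" if "trn e0 (p 0)" for e0
    using case_nat_paths[OF assms that] by (simp add: indic_def district_def)
  have "transfer adj (indic adj [a]) p = (\<Sum>e0\<in>{e. trn e (p 0)}. (if e0 = a then 1 else 0))"
    unfolding transfer_def by (rule sum.cong) (auto simp: mem)
  also have "\<dots> = (if trn a (p 0) then 1 else 0)" using finite_pred by (simp add: sum.delta)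
  finally show ?thesis .
qed

lemma dual_long:
  assumes "\<mu> \<in> FA_P adj" "c \<in> C" "2 \<le> length c"
  shows "transfer_dual adj \<mu> c = \<mu> (tl c)"
proof -
  let ?f = "transfer adj (indic adj c)"
  have tlC: "tl c \<in> C" using codes_tl assms by blast
  have ind: "indic adj (tl c) p = indic adj (tl c) q" if "p \<in> P c''" "q \<in> P c''" "length c'' = length c - 1" for p q c''
  proof -
    have "pref p (length c'') = pref q (length c'')" using that by (simp add: district_iff)
    then show ?thesis using that by (simp add: indic_def district_iff)
  qed
  have cod: "const_on_districts adj (length c - 1) ?f"
    unfolding const_on_districts_def
  proof (intro ballI impI)
    fix c'' p q assume "c'' \<in> C" "length c'' = length c - 1" "p \<in> P c''" "q \<in> P c''"
    then show "?f p = ?f q" using transfer_long[OF assms(2,3)] ind by (simp add: district_def)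
  qed
  have "transfer_dual adj \<mu> c = (\<Sum>c''\<in>CL (length c - 1). ?f (pick c'') * \<mu> c'')"
    using pairing_eq[OF assms(1) cod] assms by (simp add: transfer_dual_def)
  also have "\<dots> = (\<Sum>c''\<in>CL (length c - 1). (if c'' = tl c then \<mu> c'' else 0))"
  proof (rule sum.cong)
    fix c'' assume "c'' \<in> CL (length c - 1)"
    then have c'': "c'' \<in> C" "length c'' = length c - 1" by (auto simp: CL_def)
    have pk: "pick c'' \<in> P c''" using pick c'' by blast
    then have "?f (pick c'') = indic adj (tl c) (pick c'')" using transfer_long[OF assms(2,3)] by (simp add: district_def)
    also have "\<dots> = (if c'' = tl c then 1 else 0)"
      using pk c'' by (auto simp: indic_def district_iff)
    finally show "?f (pick c'') * \<mu> c'' = (if c'' = tl c then \<mu> c'' else 0)" by simp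
  qed simp
  also have "\<dots> = \<mu> (tl c)" using finite_CL tlC by (simp add: sum.delta' CL_def)
  finally show ?thesis .
qed

lemma dual_one:
  assumes "\<mu> \<in> FA_P adj" "a \<in> E"
  shows "transfer_dual adj \<mu> [a] = (\<Sum>e\<in>{e. trn a e}. \<mu> [e])"
proof -
  let ?f = "transfer adj (indic adj [a])"
  have cod: "const_on_districts adj 1 ?f"
    unfolding const_on_districts_def
  proof (intro ballI impI)
    fix c'' p q assume "c'' \<in> C" "length c'' = 1" "p \<in> P c''" "q \<in> P c''"
    then have "p 0 = q 0" "p \<in> paths adj" "q \<in> paths adj" by (auto simp: district_def)
    then show "?f p = ?f q" using transfer_one by simp
  qed
  have "transfer_dual adj \<mu> [a] = (\<Sum>c''\<in>CL 1. ?f (pick c'') * \<mu> c'')"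
    using pairing_eq[OF assms(1) cod] assms by (simp add: transfer_dual_def)
  also have "\<dots> = (\<Sum>e\<in>E. ?f (pick [e]) * \<mu> [e])"
  proof -
    have "CL 1 = (\<lambda>e. [e]) ` E" by (auto simp: CL_def length_Suc_conv)
    then show ?thesis by (simp add: sum.reindex inj_on_def)
  qed
  also have "\<dots> = (\<Sum>e\<in>E. if trn a e then \<mu> [e] else 0)"
  proof (rule sum.cong)
    fix e assume "e \<in> E"
    then have "pick [e] \<in> P [e]" using pick by simp
    then have "pick [e] 0 = e" "pick [e] \<in> paths adj" by (auto simp: district_def)
    then show "?f (pick [e]) * \<mu> [e] = (if trn a e then \<mu> [e] else 0)" using transfer_one by simp
  qed simp
  also have "\<dots> = (\<Sum>e\<in>{e\<in>E. trn a e}. \<mu> [e])" using finite_E by (simp add: sum.inter_filter)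
  also have "{e\<in>E. trn a e} = {e. trn a e}" using turn_E by blast
  finally show ?thesis .
qed

lemma eig_iff:
  "\<mu> \<in> eigenspace_P adj z \<longleftrightarrow> \<mu> \<in> FA_P adj \<and> (\<forall>c\<in>C. 2 \<le> length c \<longrightarrow> \<mu> (tl c) = z * \<mu> c)"
proof
  assume a: "\<mu> \<in> eigenspace_P adj z"
  then have fa: "\<mu> \<in> FA_P adj" and td: "transfer_dual adj \<mu> = (\<lambda>c. z * \<mu> c)" by (auto simp: eigenspace_P_def)
  show "\<mu> \<in> FA_P adj \<and> (\<forall>c\<in>C. 2 \<le> length c \<longrightarrow> \<mu> (tl c) = z * \<mu> c)"
  proof (intro conjI ballI impI)
    fix c assume "c \<in> C" "2 \<le> length c"
    have "transfer_dual adj \<mu> c = z * \<mu> c" using td by simp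
    then show "\<mu> (tl c) = z * \<mu> c" using dual_long[OF fa \<open>c \<in> C\<close> \<open>2 \<le> length c\<close>] by simp
  qed (rule fa)
next
  assume a: "\<mu> \<in> FA_P adj \<and> (\<forall>c\<in>C. 2 \<le> length c \<longrightarrow> \<mu> (tl c) = z * \<mu> c)"
  then have fa: "\<mu> \<in> FA_P adj" and ev: "\<And>c. c \<in> C \<Longrightarrow> 2 \<le> length c \<Longrightarrow> \<mu> (tl c) = z * \<mu> c" by auto
  have "transfer_dual adj \<mu> c = z * \<mu> c" for c
  proof (cases "c \<in> C")
    case False then show ?thesis using FA_P_zero[OF fa False] by (simp add: transfer_dual_def)
  next
    case True
    show ?thesis
    proof (cases "2 \<le> length c")
      case True then show ?thesis using dual_long[OF fa \<open>c \<in> C\<close>] ev[OF \<open>c \<in> C\<close>] by simp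
    next
      case False
      then have "length c = 1" using True by (cases c) (auto simp: codes_def Suc_le_eq)
      then obtain a where ca: "c = [a]" by (auto simp: length_Suc_conv)
      then have aE: "a \<in> E" using True by simp
      have "transfer_dual adj \<mu> c = (\<Sum>e\<in>{e. trn a e}. \<mu> [e])" using dual_one[OF fa aE] ca by simp
      also have "\<dots> = (\<Sum>e\<in>{e. trn a e}. z * \<mu> [a, e])"
      proof (rule sum.cong)
        fix e assume "e \<in> {e. trn a e}"
        then have "[a, e] \<in> C" using codes_snoc[of "[a]" e] aE by simp
        then show "\<mu> [e] = z * \<mu> [a, e]" using ev[of "[a, e]"] by simp
      qed simp
      also have "\<dots> = z * \<mu> c" using FA_P_add[OF fa True] ca by (simp add: sum_distrib_left)
      finally show ?thesis .
    qed
  qed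
  then show "\<mu> \<in> eigenspace_P adj z" using fa by (auto simp: eigenspace_P_def)
qed

lemma eig_drop:
  assumes "\<mu> \<in> eigenspace_P adj z" "c \<in> C" "k < length c"
  shows "\<mu> (drop k c) = z ^ k * \<mu> c"
  using assms(3)
proof (induction k)
  case (Suc k)
  have "drop k c \<in> C" using codes_drop assms Suc by auto
  moreover have "2 \<le> length (drop k c)" using Suc by auto
  ultimately have "\<mu> (tl (drop k c)) = z * \<mu> (drop k c)" using assms(1) eig_iff by blast
  then show ?case using Suc by (simp add: drop_Suc tl_drop)
qed simp

end



context G begin

definition fwd_closed :: "('v \<times> 'v) set \<Rightarrow> bool" where
  "fwd_closed K \<longleftrightarrow> K \<subseteq> E \<and> (\<forall>e\<in>K. \<forall>e'. trn e e' \<longrightarrow> e' \<in> K)"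

lemma card_in_out_E: "card {e\<in>E. snd e = v} = card {e\<in>E. fst e = v}"
proof -
  have "bij_betw rev_edge {e\<in>E. snd e = v} {e\<in>E. fst e = v}"
    unfolding bij_betw_def inj_on_def
  proof (intro conjI ballI impI)
    fix x y assume "rev_edge x = rev_edge y" then show "x = y" by (metis rev_edge_rev_edge)
  next
    show "rev_edge ` {e \<in> E. snd e = v} = {e \<in> E. fst e = v}"
    proof
      show "rev_edge ` {e \<in> E. snd e = v} \<subseteq> {e \<in> E. fst e = v}" using rev_E by auto
      show "{e \<in> E. fst e = v} \<subseteq> rev_edge ` {e \<in> E. snd e = v}"
      proof
        fix x assume "x \<in> {e \<in> E. fst e = v}"
        then have "rev_edge x \<in> {e \<in> E. snd e = v}" "x = rev_edge (rev_edge x)" using rev_E by auto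
        then show "x \<in> rev_edge ` {e \<in> E. snd e = v}" by blast
      qed
    qed
  qed
  then show ?thesis by (rule bij_betw_same_card)
qed

lemma in_le_out:
  assumes K: "fwd_closed K"
  shows "card {e\<in>K. snd e = v} \<le> card {e\<in>K. fst e = v}"
proof -
  have KE: "K \<subseteq> E" using K by (simp add: fwd_closed_def)
  have fin: "finite {e\<in>K. snd e = v}" "finite {e\<in>K. fst e = v}"
    using finite_subset[OF _ finite_E] KE by auto
  show ?thesis
  proof (cases "{e\<in>K. snd e = v} = {}")
    case True then show ?thesis by (metis card.empty zero_le)
  next
    case False
    then obtain a where a: "(a, v) \<in> K" by auto
    show ?thesis
    proof (cases "\<exists>b. b \<noteq> a \<and> (b, v) \<in> K")
      case True
      then obtain b where b: "b \<noteq> a" "(b, v) \<in> K" by auto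
      have "{e\<in>K. fst e = v} = {e\<in>E. fst e = v}"
      proof
        show "{e\<in>E. fst e = v} \<subseteq> {e\<in>K. fst e = v}"
        proof
          fix e assume e: "e \<in> {e\<in>E. fst e = v}"
          obtain w where w: "e = (v, w)" using e by (cases e) auto
          have "trn (a, v) e \<or> trn (b, v) e"
            using e w a b KE b(1) by (auto simp: turn_def rev_edge_def)
          then show "e \<in> {e\<in>K. fst e = v}" using K a b e unfolding fwd_closed_def by blast
        qed
      qed (use KE in auto)
      moreover have "card {e\<in>K. snd e = v} \<le> card {e\<in>E. snd e = v}"
        by (rule card_mono) (use finite_E KE in auto)
      ultimately show ?thesis using card_in_out_E by simp
    next
      case False
      then have S1: "{e\<in>K. snd e = v} = {(a, v)}" using a by auto
      obtain e' where e': "trn (a, v) e'" using succ_ex a KE by blast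
      then have "e' \<in> K" using K a unfolding fwd_closed_def by blast
      moreover have "fst e' = v" using e' by (simp add: turn_def)
      ultimately have "e' \<in> {e\<in>K. fst e = v}" by simp
      then have "card {e\<in>K. fst e = v} \<ge> 1" using fin by (metis One_nat_def Suc_leI card_gt_0_iff empty_iff)
      then show ?thesis using S1 by simp
    qed
  qed
qed

lemma fwd_closed_start:
  assumes K: "fwd_closed K" and e: "e \<in> K"
  shows "\<exists>e'\<in>K. snd e' = fst e"
proof -
  have KE: "K \<subseteq> E" using K by (simp add: fwd_closed_def)
  have finK: "finite K" using finite_subset[OF KE finite_E] .
  let ?i = "\<lambda>v. card {e\<in>K. snd e = v}" and ?o = "\<lambda>v. card {e\<in>K. fst e = v}"
  have part: "card K = (\<Sum>v\<in>V. card {e\<in>K. f e = v})" if fV: "\<And>e. e \<in> K \<Longrightarrow> f e \<in> V" for f :: "'v \<times> 'v \<Rightarrow> 'v"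
  proof -
    have "K = (\<Union>v\<in>V. {e\<in>K. f e = v})" using fV by auto
    then have "card K = card (\<Union>v\<in>V. {e\<in>K. f e = v})" by simp
    also have "\<dots> = (\<Sum>v\<in>V. card {e\<in>K. f e = v})"
      by (rule card_UN_disjoint) (use finV finK in auto)
    finally show ?thesis .
  qed
  have si: "card K = (\<Sum>v\<in>V. ?i v)" by (rule part) (use KE E_V in auto)
  have so: "card K = (\<Sum>v\<in>V. ?o v)" by (rule part) (use KE E_V in auto)
  have fV: "fst e \<in> V" using e KE E_V[of e] by auto
  show ?thesis
  proof (rule ccontr)
    assume "\<not> ?thesis"
    then have "{x\<in>K. snd x = fst e} = {}" by auto
    then have "?i (fst e) = 0" by (metis card.empty)
    moreover have "?o (fst e) \<ge> 1"
    proof -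
      have "e \<in> {x\<in>K. fst x = fst e}" using e by auto
      moreover have "finite {x\<in>K. fst x = fst e}" using finK by auto
      ultimately show ?thesis by (metis One_nat_def Suc_leI card_gt_0_iff empty_iff)
    qed
    ultimately have "?i (fst e) < ?o (fst e)" by simp
    then have "(\<Sum>v\<in>V. ?i v) < (\<Sum>v\<in>V. ?o v)"
      using sum_strict_mono_ex1[OF finV, of ?i ?o] in_le_out[OF K] fV by blast
    then show False using si so by simp
  qed
qed

definition "Fw h = {e. \<exists>W\<in>C. hd W = h \<and> last W = e}"

lemma Fw_closed: assumes "h \<in> E" shows "fwd_closed (Fw h)" "h \<in> Fw h"
proof -
  show "h \<in> Fw h" using assms unfolding Fw_def by (intro CollectI bexI[of _ "[h]"]) auto
  have "Fw h \<subseteq> E"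
  proof
    fix e assume "e \<in> Fw h"
    then obtain W where W: "W \<in> C" "last W = e" by (auto simp: Fw_def)
    then show "e \<in> E" using codes_nth_E[of W "length W - 1"] by (auto simp: codes_def last_conv_nth)
  qed
  moreover have "\<forall>e\<in>Fw h. \<forall>e'. trn e e' \<longrightarrow> e' \<in> Fw h"
  proof (intro ballI allI impI)
    fix e e' assume "e \<in> Fw h" "trn e e'"
    then obtain W where W: "W \<in> C" "hd W = h" "last W = e" by (auto simp: Fw_def)
    then have "W @ [e'] \<in> C" using codes_snoc \<open>trn e e'\<close> by blast
    moreover have "hd (W @ [e']) = h" "last (W @ [e']) = e'" using W by (auto simp: codes_def)
    ultimately show "e' \<in> Fw h" by (auto simp: Fw_def)
  qed
  ultimately show "fwd_closed (Fw h)" by (simp add: fwd_closed_def)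
qed

lemma reach_vertex: assumes "h \<in> E" shows "\<exists>W\<in>C. hd W = h \<and> snd (last W) = v0"
proof -
  let ?T = "snd ` Fw h"
  have cl: "y \<in> ?T \<Longrightarrow> adj y z \<Longrightarrow> z \<in> ?T" for y z
  proof -
    assume y: "y \<in> ?T" and yz: "adj y z"
    then obtain e where e: "e \<in> Fw h" "snd e = y" by auto
    show "z \<in> ?T"
    proof (cases "z = fst e")
      case True
      then show ?thesis using fwd_closed_start[OF Fw_closed(1)[OF assms] e(1)] by force
    next
      case False
      have "e \<in> E" using e Fw_closed(1)[OF assms] by (auto simp: fwd_closed_def)
      then have "trn e (y, z)" using False yz e by (auto simp: turn_def edges_def rev_edge_def)
      then have "(y, z) \<in> Fw h" using Fw_closed(1)[OF assms] e unfolding fwd_closed_def by blast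
      then show ?thesis by force
    qed
  qed
  have "snd h \<in> V" using E_V assms by auto
  then have "(snd h, v0) \<in> {(a, b). adj a b}\<^sup>*" using conn v0V by blast
  then have "v0 \<in> ?T"
  proof (induction rule: rtrancl_induct)
    case base then show ?case using Fw_closed(2)[OF assms] by blast
  next
    case (step y z) then show ?case using cl by auto
  qed
  then obtain e where "e \<in> Fw h" "snd e = v0" by auto
  then show ?thesis by (auto simp: Fw_def)
qed

lemma reach: assumes "c \<in> C" shows "\<exists>d. d @ c \<in> VC"
proof -
  have cne: "c \<noteq> []" and hE: "hd c \<in> E" using assms by (auto simp: codes_def)
  obtain W where W: "W \<in> C" "hd W = rev_edge (hd c)" "snd (last W) = v0"
    using reach_vertex[OF rev_E[OF hE]] by blast
  have Wne: "W \<noteq> []" using W by (auto simp: codes_def)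
  have invW: "einv W = einv (tl W) @ [hd c]"
    using Wne W(2) by (cases W) (auto simp: einv_def)
  show ?thesis
  proof (cases "tl W = []")
    case True
    then have "W = [rev_edge (hd c)]" using Wne W(2) by (cases W) auto
    then have "fst (hd c) = v0" using W(3) by simp
    then show ?thesis using assms by (intro exI[of _ "[]"]) (simp add: VC_def)
  next
    case False
    have "einv W \<in> C" using codes_inv W by blast
    then have "trn (last (einv (tl W))) (hd c)" using codes_append_D[of "einv (tl W)" "[hd c]"] invW False
      by (auto simp: einv_def)
    moreover have dC: "einv (tl W) \<in> C" using codes_append_D[of "einv (tl W)" "[hd c]"] invW False \<open>einv W \<in> C\<close>
      by (auto simp: einv_def)
    ultimately have "einv (tl W) @ c \<in> C" using codes_append assms by blast
    moreover have "fst (hd (einv (tl W) @ c)) = v0"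
    proof -
      have "hd (einv W) = rev_edge (last W)" using Wne by (simp add: einv_def hd_rev last_map)
      moreover have "hd (einv W) = hd (einv (tl W))" using invW False by (simp add: einv_def)
      moreover have "einv (tl W) \<noteq> []" using False by (simp add: einv_def)
      ultimately have "hd (einv (tl W) @ c) = rev_edge (last W)" by simp
      then show ?thesis using W(3) by simp
    qed
    ultimately show ?thesis by (auto simp: VC_def)
  qed
qed

end



context G begin

lemma codes_chain: "c \<in> C \<Longrightarrow> Suc i < length c \<Longrightarrow> snd (c ! i) = fst (c ! Suc i)"
  using codes_turn by (simp add: turn_def)

lemma Gamma_cases: assumes "g \<in> Gamma adj v0" "g \<noteq> []"
  shows "g \<in> C" "fst (g ! 0) = v0" "snd (g ! (length g - 1)) = v0"
  using assms by (auto simp: Gamma_def tree_verts_def hd_conv_nth last_conv_nth)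

lemma red_code: "xs \<in> C \<or> xs = [] \<Longrightarrow> red xs = xs"
proof (induction xs)
  case (Cons e ys)
  show ?case
  proof (cases ys)
    case Nil then show ?thesis by simp
  next
    case (Cons f ys')
    have eys: "e # ys \<in> C" using Cons.prems by auto
    have "ys \<in> C" using codes_drop[OF eys, of 1] Cons by simp
    then have "red ys = ys" using Cons.IH by simp
    moreover have "f \<noteq> rev_edge e" using codes_turn[OF eys, of 0] Cons by (simp add: turn_def)
    ultimately show ?thesis using Cons by simp
  qed
qed simp

definition "jj g x = lcpr g x"
definition "yy g x = einv (drop (jj g x) g) @ drop (jj g x) x"

lemma jj_props: assumes "length g < length x"
  shows "jj g x \<le> length g" "\<And>i. i < jj g x \<Longrightarrow> g ! i = x ! i"
    "jj g x < length g \<Longrightarrow> g ! jj g x \<noteq> x ! jj g x"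
  using lcpr_le[of g x] lcpr_nth[of _ g x] lcpr_neq[of g x] assms by (auto simp: jj_def)

lemma einv_split: assumes "j \<le> length g" "i < length g - j"
  shows "einv g ! i = einv (drop j g) ! i"
proof -
  have "einv g = einv (drop j g) @ einv (take j g)" by (metis append_take_drop_id einv_append)
  then show ?thesis using assms by (simp add: nth_append)
qed

lemma yy_length: assumes "length g < length x" shows "length (yy g x) = (length g - jj g x) + (length x - jj g x)"
  by (simp add: yy_def)

lemma yy_nth1: assumes "length g < length x" "i < length g - jj g x"
  shows "yy g x ! i = einv g ! i"
  using assms einv_split[of "jj g x" g i] jj_props[OF assms(1)] by (simp add: yy_def nth_append)

lemma yy_nth2: assumes "length g < length x" "length g - jj g x \<le> i"
  shows "yy g x ! i = x ! (jj g x + (i - (length g - jj g x)))"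
  using assms jj_props[OF assms(1)] by (simp add: yy_def nth_append)

lemma yy_VC: assumes g: "g \<in> Gamma adj v0" and x: "x \<in> VC" and lt: "length g < length x"
  shows "yy g x \<in> VC"
proof -
  let ?j = "jj g x" and ?n = "length g"
  have xC: "x \<in> C" using x VC_C by blast
  have jn: "?j \<le> ?n" using jj_props[OF lt] by simp
  show ?thesis
  proof (cases "?j = ?n")
    case True
    then have y: "yy g x = drop ?n x" by (simp add: yy_def)
    have "drop ?n x \<in> C" using codes_drop[OF xC lt] .
    moreover have "fst (hd (drop ?n x)) = v0"
    proof (cases "?n = 0")
      case True then show ?thesis using x by (simp add: VC_def)
    next
      case False
      then have "g \<noteq> []" by auto
      have "snd (x ! (?n - 1)) = fst (x ! ?n)" using codes_chain[OF xC, of "?n - 1"] lt False by simp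
      moreover have "x ! (?n - 1) = g ! (?n - 1)" using jj_props(2)[OF lt, of "?n - 1"] True False by simp
      ultimately show ?thesis using Gamma_cases[OF g \<open>g \<noteq> []\<close>] lt by (simp add: hd_drop_conv_nth)
    qed
    ultimately show ?thesis using y by (simp add: VC_def)
  next
    case False
    then have jlt: "?j < ?n" using jn by simp
    then have gne: "g \<noteq> []" by auto
    have gC: "g \<in> C" using Gamma_cases[OF g gne] by simp
    have A: "einv (drop ?j g) \<in> C" using codes_inv codes_drop[OF gC jlt] by blast
    have B: "drop ?j x \<in> C" using codes_drop[OF xC] jlt lt by simp
    have lastA: "last (einv (drop ?j g)) = rev_edge (g ! ?j)"
      using jlt by (simp add: einv_def last_rev hd_map hd_drop_conv_nth)
    have hdB: "hd (drop ?j x) = x ! ?j" using jlt lt by (simp add: hd_drop_conv_nth)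
    have gjE: "g ! ?j \<in> E" using codes_nth_E[OF gC jlt] .
    have xjE: "x ! ?j \<in> E" using codes_nth_E[OF xC] jlt lt by simp
    have fsts: "fst (g ! ?j) = fst (x ! ?j)"
    proof (cases "?j = 0")
      case True then show ?thesis using Gamma_cases[OF g gne] x gne VC_ne[OF x] by (simp add: VC_def hd_conv_nth)
    next
      case False
      have "fst (g ! ?j) = snd (g ! (?j - 1))" using codes_chain[OF gC, of "?j - 1"] False jlt by simp
      also have "\<dots> = snd (x ! (?j - 1))" using jj_props(2)[OF lt, of "?j - 1"] False by simp
      also have "\<dots> = fst (x ! ?j)" using codes_chain[OF xC, of "?j - 1"] False jlt lt by simp
      finally show ?thesis .
    qed
    have "x ! ?j \<noteq> g ! ?j" using jj_props(3)[OF lt jlt] by simp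
    then have "trn (last (einv (drop ?j g))) (hd (drop ?j x))"
      using lastA hdB gjE xjE fsts rev_E by (simp add: turn_def)
    then have "yy g x \<in> C" using codes_append[OF A B] by (simp add: yy_def)
    moreover have "fst (hd (yy g x)) = v0"
    proof -
      have "hd (yy g x) = hd (einv (drop ?j g))" using jlt by (simp add: yy_def einv_def)
      also have "\<dots> = rev_edge (last g)" using jlt by (simp add: einv_def hd_rev last_map)
      finally show ?thesis using Gamma_cases[OF g gne] gne by (simp add: last_conv_nth)
    qed
    ultimately show ?thesis by (simp add: VC_def)
  qed
qed

lemma bd_act_eq: "bd_act g \<omega> = (\<lambda>i. if i < length g - lcpr (einv g) (pref \<omega> (length g)) then g ! i
    else \<omega> (i - (length g - lcpr (einv g) (pref \<omega> (length g))) + lcpr (einv g) (pref \<omega> (length g))))"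
  by (simp only: bd_act_def Let_def lcp_lcpr einv_def)

lemma pre_district: assumes g: "g \<in> Gamma adj v0" and x: "x \<in> VC" and lt: "length g < length x"
  shows "{\<omega>\<in>Bd. bd_act g \<omega> \<in> P x} = P (yy g x)"
proof
  let ?j = "jj g x" and ?n = "length g" and ?y = "yy g x"
  have xC: "x \<in> C" using x VC_C by blast
  have jn: "?j \<le> ?n" and jeq: "\<And>i. i < ?j \<Longrightarrow> g ! i = x ! i" using jj_props[OF lt] by auto
  have ly: "length ?y = (?n - ?j) + (length x - ?j)" using yy_length[OF lt] .
  show "P ?y \<subseteq> {\<omega>\<in>Bd. bd_act g \<omega> \<in> P x}"
  proof
    fix \<omega> assume w: "\<omega> \<in> P ?y"
    have wp: "\<omega> \<in> paths adj" and wy: "\<And>i. i < length ?y \<Longrightarrow> \<omega> i = ?y ! i" using w by (auto simp: district_def)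
    have wB: "\<omega> \<in> Bd" using district_Bd[OF yy_VC[OF g x lt]] w by blast
    have k: "lcpr (einv g) (pref \<omega> ?n) = ?n - ?j"
    proof (rule lcpr_eqI)
      show "?n - ?j \<le> length (einv g)" "?n - ?j \<le> length (pref \<omega> ?n)" by auto
      show "einv g ! i = pref \<omega> ?n ! i" if "i < ?n - ?j" for i
        using that wy[of i] ly yy_nth1[OF lt that] by simp
      show "einv g ! (?n - ?j) \<noteq> pref \<omega> ?n ! (?n - ?j)" if "?n - ?j < length (einv g)" "?n - ?j < length (pref \<omega> ?n)"
      proof -
        have j0: "0 < ?j" using that by simp
        have "einv g ! (?n - ?j) = rev_edge (g ! (?j - 1))" using that j0 jn by (simp add: einv_nth)
        also have "\<dots> = rev_edge (x ! (?j - 1))" using jeq[of "?j - 1"] j0 by simp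
        finally have a: "einv g ! (?n - ?j) = rev_edge (x ! (?j - 1))" .
        have "pref \<omega> ?n ! (?n - ?j) = ?y ! (?n - ?j)" using that wy[of "?n - ?j"] ly lt jn by simp
        also have "\<dots> = x ! ?j" using yy_nth2[OF lt, of "?n - ?j"] by simp
        finally have b: "pref \<omega> ?n ! (?n - ?j) = x ! ?j" .
        have "trn (x ! (?j - 1)) (x ! ?j)" using codes_turn[OF xC, of "?j - 1"] j0 jn lt by simp
        then have "x ! ?j \<noteq> rev_edge (x ! (?j - 1))" by (simp add: turn_def)
        then show ?thesis using a b by metis
      qed
    qed
    have r: "bd_act g \<omega> = (\<lambda>i. if i < ?j then g ! i else \<omega> (i - ?j + (?n - ?j)))"
    proof -
      have nn: "?n - (?n - ?j) = ?j" using jn by simp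
      show ?thesis unfolding bd_act_eq k nn ..
    qed
    have rx: "bd_act g \<omega> i = x ! i" if "i < length x" for i
    proof (cases "i < ?j")
      case True then show ?thesis using r jeq by simp
    next
      case False
      have idx: "i - ?j + (?n - ?j) < length ?y" using ly that False by simp
      have "bd_act g \<omega> i = ?y ! (i - ?j + (?n - ?j))" using r False wy[OF idx] by simp
      also have "\<dots> = x ! (?j + (i - ?j + (?n - ?j) - (?n - ?j)))" by (rule yy_nth2[OF lt]) simp
      also have "?j + (i - ?j + (?n - ?j) - (?n - ?j)) = i" using False by simp
      finally show ?thesis .
    qed
    have "bd_act g \<omega> \<in> paths adj"
      unfolding paths_def
    proof (intro CollectI allI)
      fix i
      show "trn (bd_act g \<omega> i) (bd_act g \<omega> (Suc i))"
      proof (cases "Suc i < length x")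
        case True then show ?thesis using rx codes_turn[OF xC True] by simp
      next
        case False
        then have "\<not> i < ?j" "\<not> Suc i < ?j" using lt jn by auto
        then have "bd_act g \<omega> i = \<omega> (i - ?j + (?n - ?j))" "bd_act g \<omega> (Suc i) = \<omega> (Suc (i - ?j + (?n - ?j)))"
          using r by (auto simp: Suc_diff_le)
        then show ?thesis using paths_turn[OF wp] by simp
      qed
    qed
    then have "bd_act g \<omega> \<in> P x" using rx by (simp add: district_def)
    then show "\<omega> \<in> {\<omega>\<in>Bd. bd_act g \<omega> \<in> P x}" using wB by simp
  qed
next
  let ?j = "jj g x" and ?n = "length g" and ?y = "yy g x"
  have xC: "x \<in> C" using x VC_C by blast
  have jn: "?j \<le> ?n" using jj_props[OF lt] by auto
  have ly: "length ?y = (?n - ?j) + (length x - ?j)" using yy_length[OF lt] .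
  show "{\<omega>\<in>Bd. bd_act g \<omega> \<in> P x} \<subseteq> P ?y"
  proof clarify
    fix \<omega> assume wB: "\<omega> \<in> Bd" and rP: "bd_act g \<omega> \<in> P x"
    have wp: "\<omega> \<in> paths adj" using wB by (simp add: bd_def)
    define k where "k = lcpr (einv g) (pref \<omega> ?n)"
    have kn: "k \<le> ?n" using lcpr_le[of "einv g" "pref \<omega> ?n"] by (simp add: k_def)
    have r: "bd_act g \<omega> = (\<lambda>i. if i < ?n - k then g ! i else \<omega> (i - (?n - k) + k))"
      unfolding bd_act_eq k_def ..
    have rx: "\<And>i. i < length x \<Longrightarrow> bd_act g \<omega> i = x ! i" using rP by (simp add: district_def)
    have kw: "\<And>i. i < k \<Longrightarrow> einv g ! i = \<omega> i"
    proof -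
      fix i assume "i < k"
      then have "einv g ! i = pref \<omega> ?n ! i" using lcpr_nth by (simp add: k_def)
      then show "einv g ! i = \<omega> i" using \<open>i < k\<close> kn by simp
    qed
    have jk: "?j = ?n - k" unfolding jj_def
    proof (rule lcpr_eqI)
      show "?n - k \<le> length g" "?n - k \<le> length x" using lt by auto
      show "g ! i = x ! i" if "i < ?n - k" for i using r rx[of i] that lt by simp
      show "g ! (?n - k) \<noteq> x ! (?n - k)" if "?n - k < length g" "?n - k < length x"
      proof -
        have k0: "0 < k" using that by simp
        have "x ! (?n - k) = \<omega> k" using rx[of "?n - k"] that r by simp
        moreover have "einv g ! (k - 1) = rev_edge (g ! (?n - k))" using k0 kn by (simp add: einv_nth)
        moreover have "einv g ! (k - 1) = \<omega> (k - 1)" using kw k0 by simp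
        moreover have "trn (\<omega> (k - 1)) (\<omega> k)" using paths_turn[OF wp, of "k - 1"] k0 by simp
        ultimately show ?thesis by (metis rev_edge_rev_edge turn_def)
      qed
    qed
    have nj: "?n - ?j = k" using jk kn by simp
    have "\<forall>i<length ?y. \<omega> i = ?y ! i"
    proof (intro allI impI)
      fix i assume i: "i < length ?y"
      show "\<omega> i = ?y ! i"
      proof (cases "i < ?n - ?j")
        case True
        then show ?thesis using yy_nth1[OF lt True] kw nj by simp
      next
        case False
        define i' where "i' = ?j + (i - (?n - ?j))"
        have yi: "?y ! i = x ! i'" using yy_nth2[OF lt] False by (simp add: i'_def)
        have i'x: "i' < length x" using i ly False by (simp add: i'_def)
        have "\<not> i' < ?n - k" using jk by (simp add: i'_def)
        then have "bd_act g \<omega> i' = \<omega> (i' - (?n - k) + k)" using r by simp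
        also have "i' - (?n - k) + k = i" using jk nj False by (simp add: i'_def)
        finally show ?thesis using rx[OF i'x] yi by simp
      qed
    qed
    then show "\<omega> \<in> P ?y" using wp by (simp add: district_def)
  qed
qed

lemma cocycle_val: assumes g: "g \<in> Gamma adj v0" and x: "x \<in> VC" and lt: "length g < length x"
  and w: "\<omega> \<in> P x"
  shows "cocycle z g \<omega> = z powi (int (length g) - 2 * int (jj g x))"
proof -
  let ?n = "length g"
  have xC: "x \<in> C" using x VC_C by blast
  have gr: "deck_act g [] = g"
  proof (cases "g = []")
    case True then show ?thesis by (simp add: deck_act_def)
  next
    case False then show ?thesis using Gamma_cases[OF g False] red_code by (simp add: deck_act_def)
  qed
  have wx: "\<And>i. i < length x \<Longrightarrow> \<omega> i = x ! i" and wp: "\<omega> \<in> paths adj" using w by (auto simp: district_def)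
  define k where "k = lcpr g (pref \<omega> ?n)"
  have kn: "k \<le> ?n" using lcpr_le[of g] by (simp add: k_def)
  have kj: "k = jj g x" unfolding jj_def
  proof (rule lcpr_eqI[symmetric])
    show "k \<le> length g" "k \<le> length x" using kn lt by auto
    show "g ! i = x ! i" if "i < k" for i
      using lcpr_nth[of i g "pref \<omega> ?n"] that kn wx[of i] lt by (simp add: k_def)
    show "g ! k \<noteq> x ! k" if "k < length g" "k < length x"
      using lcpr_neq[of g "pref \<omega> ?n"] that wx[of k] by (simp add: k_def)
  qed
  have lm: "lcpr g (pref \<omega> m) = k" if "k \<le> m" for m
  proof (rule lcpr_eqI)
    show "k \<le> length g" "k \<le> length (pref \<omega> m)" using kn that by auto
    show "g ! i = pref \<omega> m ! i" if "i < k" for i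
      using lcpr_nth[of i g "pref \<omega> ?n"] \<open>i < k\<close> kn \<open>k \<le> m\<close> by (simp add: k_def)
    show "g ! k \<noteq> pref \<omega> m ! k" if "k < length g" "k < length (pref \<omega> m)"
      using lcpr_neq[of g "pref \<omega> ?n"] that by (simp add: k_def)
  qed
  have rayg: "ray g \<omega> = {take i g | i. k \<le> i \<and> i \<le> ?n} \<union> {pref \<omega> m | m. k \<le> m}"
    by (simp add: ray_def lcp_lcpr k_def Let_def)
  have ray0: "ray [] \<omega> = {take i [] | i. 0 \<le> i \<and> i \<le> 0} \<union> {pref \<omega> m | m. 0 \<le> m}"
    by (simp add: ray_def lcp_lcpr Let_def)
  have ne: "\<exists>w. w \<in> ray g \<omega> \<inter> ray [] \<omega>"
    using kn by (intro exI[of _ "pref \<omega> ?n"]) (auto simp: rayg ray0)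
  have val: "tdist g w - tdist [] w = int ?n - 2 * int k" if wr: "w \<in> ray g \<omega> \<inter> ray [] \<omega>" for w
  proof -
    obtain m where m: "w = pref \<omega> m" "k \<le> m"
    proof -
      have "\<exists>m. w = pref \<omega> m"
      proof -
        have "w \<in> ray [] \<omega>" using wr by simp
        then show ?thesis unfolding ray0 by (auto simp: pref_def intro: exI[of _ 0])
      qed
      then obtain m where wm: "w = pref \<omega> m" by blast
      have "w \<in> ray g \<omega>" using wr by simp
      then have "k \<le> m" unfolding rayg
      proof
        assume "w \<in> {take i g | i. k \<le> i \<and> i \<le> ?n}"
        then obtain i where "w = take i g" "k \<le> i" "i \<le> ?n" by auto
        then show "k \<le> m" using wm by (metis length_take min.absorb2 pref_length)
      next
        assume "w \<in> {pref \<omega> m | m. k \<le> m}"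
        then obtain m' where "w = pref \<omega> m'" "k \<le> m'" by auto
        then show "k \<le> m" using wm by (metis pref_length)
      qed
      then show thesis using that wm by blast
    qed
    have "tdist g w = int ?n + int m - 2 * int k" using m lm by (simp add: tdist_def lcp_lcpr)
    moreover have "tdist [] w = int m" using m by (simp add: tdist_def lcp_lcpr)
    ultimately show ?thesis by simp
  qed
  have "horo \<omega> g [] = int ?n - 2 * int k"
    unfolding horo_def Let_def by (rule val) (rule someI_ex[OF ne])
  then show ?thesis using gr kj by (simp add: cocycle_def)
qed

end



context G begin

definition "pre g A = {\<omega>\<in>Bd. bd_act g \<omega> \<in> A}"

lemma clop_common: assumes "finite S" "\<forall>B\<in>S. clop B" shows "\<exists>N. \<forall>B\<in>S. meas N B"
  using assms
proof (induction S rule: finite_induct)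
  case empty then show ?case by simp
next
  case (insert B S)
  then obtain N where N: "\<forall>B\<in>S. meas N B" by auto
  obtain N' where "meas N' B" "N' \<ge> N" using clop_meas_ge insert by blast
  then show ?case using N meas_mono by blast
qed

lemma pre_clop: assumes g: "g \<in> Gamma adj v0" and A: "clop A" shows "clop (pre g A)"
proof -
  obtain N where N: "meas N A" "N \<ge> Suc (length g)" using clop_meas_ge A by blast
  have lev: "\<And>x. x \<in> lev N A \<Longrightarrow> x \<in> VC \<and> length g < length x \<and> length x = N"
    using N by (auto simp: lev_def)
  have eq: "pre g A = \<Union>(P ` (yy g ` lev N A))"
  proof -
    have "pre g A = (\<Union>x\<in>lev N A. pre g (P x))"
      using N(1) unfolding pre_def meas_def by blast
    also have "\<dots> = (\<Union>x\<in>lev N A. P (yy g x))"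
    proof (rule SUP_cong[OF refl])
      fix x assume "x \<in> lev N A"
      then show "pre g (P x) = P (yy g x)" using pre_district[OF g] lev unfolding pre_def by blast
    qed
    finally show ?thesis by auto
  qed
  show ?thesis unfolding clopen_bd_def
  proof (intro exI conjI)
    show "finite (yy g ` lev N A)" using finite_lev by simp
    show "\<forall>c\<in>yy g ` lev N A. c \<in> C \<and> fst (hd c) = v0" using yy_VC[OF g] lev by (auto simp: VC_def)
    show "\<forall>c\<in>yy g ` lev N A. \<forall>c'\<in>yy g ` lev N A. c \<noteq> c' \<longrightarrow> P c \<inter> P c' = {}"
    proof (intro ballI impI)
      fix c c' assume "c \<in> yy g ` lev N A" "c' \<in> yy g ` lev N A" "c \<noteq> c'"
      then obtain x x' where xx: "x \<in> lev N A" "x' \<in> lev N A" "c = yy g x" "c' = yy g x'" "x \<noteq> x'" by auto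
      have "P x \<inter> P x' = {}" using lev[OF xx(1)] lev[OF xx(2)] xx(5) by (intro district_disj) auto
      then have "pre g (P x) \<inter> pre g (P x') = {}" by (auto simp: pre_def)
      moreover have "pre g (P x) = P c" "pre g (P x') = P c'"
        using pre_district[OF g] lev[OF xx(1)] lev[OF xx(2)] xx(3,4) unfolding pre_def by blast+
      ultimately show "P c \<inter> P c' = {}" by simp
    qed
    show "pre g A = \<Union> (P ` yy g ` lev N A)" by (rule eq)
  qed
qed

lemma push_FA: assumes nu: "\<nu> \<in> FA_bd adj v0" and g: "g \<in> Gamma adj v0"
  shows "fa_push adj v0 g \<nu> \<in> FA_bd adj v0"
  unfolding FA_bd_def
proof (intro CollectI conjI allI impI)
  fix A assume "\<not> clop A" then show "fa_push adj v0 g \<nu> A = 0" by (simp add: fa_push_def)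
next
  fix A B assume ab: "clop A" "clop B" "A \<inter> B = {}"
  have "fa_push adj v0 g \<nu> (A \<union> B) = \<nu> (pre g (A \<union> B))" using clop_Un[OF ab(1,2)] by (simp add: fa_push_def pre_def)
  also have "pre g (A \<union> B) = pre g A \<union> pre g B" by (auto simp: pre_def)
  also have "\<nu> (pre g A \<union> pre g B) = \<nu> (pre g A) + \<nu> (pre g B)"
    by (rule FA_bd_add[OF nu pre_clop[OF g ab(1)] pre_clop[OF g ab(2)]]) (use ab(3) in \<open>auto simp: pre_def\<close>)
  finally show "fa_push adj v0 g \<nu> (A \<union> B) = fa_push adj v0 g \<nu> A + fa_push adj v0 g \<nu> B"
    using ab by (simp add: fa_push_def pre_def)
qed

lemma push_district: assumes g: "g \<in> Gamma adj v0" and x: "x \<in> VC" and lt: "length g < length x"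
  shows "fa_push adj v0 g \<nu> (P x) = \<nu> (P (yy g x))"
  using pre_district[OF g x lt] clop_district[OF x] by (simp add: fa_push_def)

definition valid :: "((nat \<Rightarrow> 'v \<times> 'v) \<Rightarrow> complex) \<Rightarrow> (nat \<Rightarrow> 'v \<times> 'v) set \<Rightarrow> (nat \<Rightarrow> 'v \<times> 'v) set set \<Rightarrow> bool" where
  "valid f A Q \<longleftrightarrow> finite Q \<and> (\<forall>B\<in>Q. clop B \<and> B \<noteq> {}) \<and>
      (\<forall>B\<in>Q. \<forall>B'\<in>Q. B \<noteq> B' \<longrightarrow> B \<inter> B' = {}) \<and> \<Union>Q = A \<and>
      (\<forall>B\<in>Q. \<forall>x\<in>B. \<forall>y\<in>B. f x = f y)"

lemma canon:
  assumes m: "m \<in> FA_bd adj v0" and v: "valid f A Q" and N: "\<forall>B\<in>Q. meas N B"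
  shows "(\<Sum>B\<in>Q. f (SOME x. x \<in> B) * m B) = (\<Sum>c\<in>lev N A. f (pick c) * m (P c))"
proof -
  have fQ: "finite Q" and cl: "\<And>B. B \<in> Q \<Longrightarrow> clop B" and nemp: "\<And>B. B \<in> Q \<Longrightarrow> B \<noteq> {}"
    and dj: "\<And>B B'. B \<in> Q \<Longrightarrow> B' \<in> Q \<Longrightarrow> B \<noteq> B' \<Longrightarrow> B \<inter> B' = {}" and un: "\<Union>Q = A"
    and cst: "\<And>B x y. B \<in> Q \<Longrightarrow> x \<in> B \<Longrightarrow> y \<in> B \<Longrightarrow> f x = f y"
    using v unfolding valid_def by blast+
  have step1: "f (SOME x. x \<in> B) * m B = (\<Sum>c\<in>lev N B. f (pick c) * m (P c))" if B: "B \<in> Q" for B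
  proof -
    have "m B = (\<Sum>c\<in>lev N B. m (P c))" using FA_bd_sum[OF m] N B by blast
    then have "f (SOME x. x \<in> B) * m B = (\<Sum>c\<in>lev N B. f (SOME x. x \<in> B) * m (P c))"
      by (simp add: sum_distrib_left)
    also have "\<dots> = (\<Sum>c\<in>lev N B. f (pick c) * m (P c))"
    proof (rule sum.cong)
      fix c assume c: "c \<in> lev N B"
      then have "pick c \<in> B" using pick[of c] by (auto simp: lev_def VC_def)
      moreover have "(SOME x. x \<in> B) \<in> B" using nemp[OF B] by (simp add: some_in_eq)
      ultimately show "f (SOME x. x \<in> B) * m (P c) = f (pick c) * m (P c)" using cst[OF B] by metis
    qed simp
    finally show ?thesis .
  qed
  have levU: "(\<Union>B\<in>Q. lev N B) = lev N A"
  proof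
    show "(\<Union>B\<in>Q. lev N B) \<subseteq> lev N A" using un by (auto simp: lev_def)
    show "lev N A \<subseteq> (\<Union>B\<in>Q. lev N B)"
    proof
      fix c assume c: "c \<in> lev N A"
      then have cV: "c \<in> VC" "length c = N" "P c \<subseteq> A" by (auto simp: lev_def)
      obtain p where p: "p \<in> P c" using pick VC_C cV by blast
      then obtain B where B: "B \<in> Q" "p \<in> B" using cV un by blast
      then have "P c \<subseteq> B" using meas_cases[OF _ cV(1) cV(2), of B] N p by blast
      then show "c \<in> (\<Union>B\<in>Q. lev N B)" using B cV by (auto simp: lev_def)
    qed
  qed
  have "(\<Sum>B\<in>Q. f (SOME x. x \<in> B) * m B) = (\<Sum>B\<in>Q. \<Sum>c\<in>lev N B. f (pick c) * m (P c))"
    using step1 by simp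
  also have "\<dots> = (\<Sum>c\<in>(\<Union>B\<in>Q. lev N B). f (pick c) * m (P c))"
  proof (rule sum.UNION_disjoint[symmetric])
    show "finite Q" by (rule fQ)
    show "\<forall>B\<in>Q. finite (lev N B)" using finite_lev by blast
    show "\<forall>B\<in>Q. \<forall>B'\<in>Q. B \<noteq> B' \<longrightarrow> lev N B \<inter> lev N B' = {}"
    proof (intro ballI impI)
      fix B B' assume "B \<in> Q" "B' \<in> Q" "B \<noteq> B'"
      then have d: "B \<inter> B' = {}" using dj by blast
      show "lev N B \<inter> lev N B' = {}"
      proof (rule equals0I)
        fix c assume "c \<in> lev N B \<inter> lev N B'"
        then have "c \<in> VC" "P c \<subseteq> B" "P c \<subseteq> B'" by (auto simp: lev_def)
        then show False using pick[OF VC_C[OF \<open>c \<in> VC\<close>]] d by blast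
      qed
    qed
  qed
  also have "\<dots> = (\<Sum>c\<in>lev N A. f (pick c) * m (P c))" using levU by simp
  finally show ?thesis .
qed

lemma fa_int_eval:
  assumes m: "m \<in> FA_bd adj v0" and v: "valid f A Q"
  shows "fa_int adj v0 m f A = (\<Sum>B\<in>Q. f (SOME x. x \<in> B) * m B)"
proof -
  have ex: "\<exists>s Q. valid f A Q \<and> s = (\<Sum>B\<in>Q. f (SOME x. x \<in> B) * m B)" using v by blast
  define s where "s = fa_int adj v0 m f A"
  have alt: "fa_int adj v0 m f A = (SOME s. \<exists>Q. valid f A Q \<and> s = (\<Sum>B\<in>Q. f (SOME x. x \<in> B) * m B))"
    by (simp add: fa_int_def valid_def conj_assoc)
  have "\<exists>Q. valid f A Q \<and> s = (\<Sum>B\<in>Q. f (SOME x. x \<in> B) * m B)"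
    unfolding s_def alt using someI_ex[OF ex] .
  then obtain Q' where Q': "valid f A Q'" "s = (\<Sum>B\<in>Q'. f (SOME x. x \<in> B) * m B)" by blast
  have "finite (Q \<union> Q')" "\<forall>B\<in>Q \<union> Q'. clop B" using v Q'(1) unfolding valid_def by auto
  then obtain N where N: "\<forall>B\<in>Q \<union> Q'. meas N B" using clop_common by blast
  have "s = (\<Sum>c\<in>lev N A. f (pick c) * m (P c))" using canon[OF m Q'(1)] N Q'(2) by simp
  moreover have "(\<Sum>B\<in>Q. f (SOME x. x \<in> B) * m B) = (\<Sum>c\<in>lev N A. f (pick c) * m (P c))"
    using canon[OF m v] N by simp
  ultimately show ?thesis by (simp add: s_def)
qed

lemma pi_z_eval:
  assumes nu: "\<nu> \<in> FA_bd adj v0" and g: "g \<in> Gamma adj v0" and N: "meas N A" "length g < N"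
  shows "pi_z adj v0 z g \<nu> A = (\<Sum>x\<in>lev N A. z powi (int (length g) - 2 * int (jj g x)) * \<nu> (P (yy g x)))"
proof -
  have cl: "clop A" using N meas_clop by blast
  have lev: "\<And>x. x \<in> lev N A \<Longrightarrow> x \<in> VC \<and> length g < length x \<and> length x = N \<and> P x \<subseteq> A"
    using N by (auto simp: lev_def)
  let ?Q = "P ` lev N A"
  have v: "valid (cocycle z g) A ?Q" unfolding valid_def
  proof (intro conjI ballI impI)
    show "finite ?Q" using finite_lev by simp
    fix B assume "B \<in> ?Q"
    then obtain x where x: "x \<in> lev N A" "B = P x" by auto
    show "clop B" using clop_district lev x by auto
    show "B \<noteq> {}" using pick[of x] lev x VC_C by blast
    show "cocycle z g y = cocycle z g y'" if "y \<in> B" "y' \<in> B" for y y'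
        using that cocycle_val[OF g, of x y] cocycle_val[OF g, of x y'] lev[OF x(1)] x(2) by simp
  next
    fix B B' assume "B \<in> ?Q" "B' \<in> ?Q" "B \<noteq> B'"
    then obtain x x' where xx: "x \<in> lev N A" "x' \<in> lev N A" "B = P x" "B' = P x'" by auto
    then have "x \<noteq> x'" using \<open>B \<noteq> B'\<close> by auto
    moreover have "length x = length x'" using lev[OF xx(1)] lev[OF xx(2)] by simp
    ultimately show "B \<inter> B' = {}" using district_disj xx by simp
  next
    show "\<Union> ?Q = A" using N(1) by (simp add: meas_def)
  qed
  have inj: "inj_on P (lev N A)"
    unfolding inj_on_def using district_inj lev VC_C by metis
  have "pi_z adj v0 z g \<nu> A = (\<Sum>B\<in>?Q. cocycle z g (SOME x. x \<in> B) * fa_push adj v0 g \<nu> B)"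
    using fa_int_eval[OF push_FA[OF nu g] v] cl by (simp add: pi_z_def)
  also have "\<dots> = (\<Sum>x\<in>lev N A. cocycle z g (SOME y. y \<in> P x) * fa_push adj v0 g \<nu> (P x))"
    by (simp add: sum.reindex[OF inj])
  also have "\<dots> = (\<Sum>x\<in>lev N A. z powi (int (length g) - 2 * int (jj g x)) * \<nu> (P (yy g x)))"
  proof (rule sum.cong)
    fix x assume x: "x \<in> lev N A"
    have "(SOME y. y \<in> P x) \<in> P x" using pick[of x] lev[OF x] VC_C by (simp add: pick_def)
    then show "cocycle z g (SOME y. y \<in> P x) * fa_push adj v0 g \<nu> (P x) = z powi (int (length g) - 2 * int (jj g x)) * \<nu> (P (yy g x))"
      using cocycle_val[OF g] push_district[OF g] lev[OF x] by simp
  qed simp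
  finally show ?thesis .
qed

lemma pi_z_district:
  assumes nu: "\<nu> \<in> FA_bd adj v0" and g: "g \<in> Gamma adj v0" and x: "x \<in> VC" "length g < length x"
  shows "pi_z adj v0 z g \<nu> (P x) = z powi (int (length g) - 2 * int (jj g x)) * \<nu> (P (yy g x))"
  using pi_z_eval[OF nu g meas_district(1)[OF x(1)] x(2)] meas_district(2)[OF x(1)] by simp

lemma einv_from_local:
  assumes nu: "\<nu> \<in> FA_bd adj v0" and g: "g \<in> Gamma adj v0"
    and loc: "\<And>x. x \<in> VC \<Longrightarrow> length g < length x \<Longrightarrow> z powi (int (length g) - 2 * int (jj g x)) * \<nu> (P (yy g x)) = \<nu> (P x)"
  shows "pi_z adj v0 z g \<nu> = \<nu>"
proof
  fix A show "pi_z adj v0 z g \<nu> A = \<nu> A"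
  proof (cases "clop A")
    case False then show ?thesis using FA_bd_zero[OF nu False] by (simp add: pi_z_def)
  next
    case True
    then obtain N where N: "meas N A" "N \<ge> Suc (length g)" using clop_meas_ge by blast
    then have "pi_z adj v0 z g \<nu> A = (\<Sum>x\<in>lev N A. z powi (int (length g) - 2 * int (jj g x)) * \<nu> (P (yy g x)))"
      using pi_z_eval[OF nu g N(1)] by simp
    also have "\<dots> = (\<Sum>x\<in>lev N A. \<nu> (P x))"
      by (rule sum.cong) (use loc N in \<open>auto simp: lev_def\<close>)
    also have "\<dots> = \<nu> A" using FA_bd_sum[OF nu N(1)] by simp
    finally show ?thesis .
  qed
qed

end



lemma powi_split: assumes "(z::complex) \<noteq> 0" "j \<le> n"
  shows "z powi (int n - 2 * int j) = z ^ (n - j) / z ^ j"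
proof -
  have e: "int n - 2 * int j = int (n - j) - int j" using assms(2) by (simp add: of_nat_diff)
  have "z powi (int (n - j) - int j) = z powi (int (n - j)) / z powi (int j)"
    by (rule power_int_diff) (use assms(1) in simp)
  then show ?thesis unfolding e power_int_of_nat .
qed

context G begin

lemma FA_bd_lin: assumes "\<nu>1 \<in> FA_bd adj v0" "\<nu>2 \<in> FA_bd adj v0"
  shows "(\<lambda>A. a * \<nu>1 A + b * \<nu>2 A) \<in> FA_bd adj v0"
  using assms unfolding FA_bd_def by (auto simp: algebra_simps)

lemma Res_into: assumes z: "z \<noteq> 0" and mu: "\<mu> \<in> eigenspace_P adj z"
  shows "Res adj v0 \<mu> \<in> FA_bd_inv adj v0 z"
proof -
  have fa: "\<mu> \<in> FA_P adj" using mu eig_iff by blast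
  have nu: "Res adj v0 \<mu> \<in> FA_bd adj v0" and val: "\<forall>c\<in>VC. Res adj v0 \<mu> (P c) = \<mu> c" using Res[OF fa] by auto
  have "pi_z adj v0 z g (Res adj v0 \<mu>) = Res adj v0 \<mu>" if g: "g \<in> Gamma adj v0" for g
  proof (rule einv_from_local[OF nu g])
    fix x assume x: "x \<in> VC" and lt: "length g < length x"
    let ?n = "length g" and ?j = "jj g x" and ?y = "yy g x"
    have yV: "?y \<in> VC" using yy_VC[OF g x lt] .
    have jn: "?j \<le> ?n" using jj_props[OF lt] by simp
    have "drop (?n - ?j) ?y = drop ?j x" by (simp add: yy_def)
    moreover have "\<mu> (drop (?n - ?j) ?y) = z ^ (?n - ?j) * \<mu> ?y"
      using eig_drop[OF mu VC_C[OF yV], of "?n - ?j"] yy_length[OF lt] lt jn by simp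
    moreover have "\<mu> (drop ?j x) = z ^ ?j * \<mu> x"
      using eig_drop[OF mu VC_C[OF x], of ?j] lt jn by simp
    ultimately have e: "z ^ (?n - ?j) * \<mu> ?y = z ^ ?j * \<mu> x" by simp
    have "z powi (int ?n - 2 * int ?j) * Res adj v0 \<mu> (P ?y) = z ^ (?n - ?j) * \<mu> ?y / z ^ ?j"
      using powi_split[OF z jn] val yV by simp
    also have "\<dots> = \<mu> x" using e z by (simp add: field_simps)
    also have "\<dots> = Res adj v0 \<mu> (P x)" using val x by simp
    finally show "z powi (int ?n - 2 * int ?j) * Res adj v0 \<mu> (P ?y) = Res adj v0 \<mu> (P x)" .
  qed
  then show ?thesis using nu by (simp add: FA_bd_inv_def)
qed

lemma Res_inj: assumes "\<mu>1 \<in> eigenspace_P adj z" "\<mu>2 \<in> eigenspace_P adj z"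
  and eq: "Res adj v0 \<mu>1 = Res adj v0 \<mu>2" shows "\<mu>1 = \<mu>2"
proof
  fix c
  have fa: "\<mu>1 \<in> FA_P adj" "\<mu>2 \<in> FA_P adj" using assms eig_iff by blast+
  show "\<mu>1 c = \<mu>2 c"
  proof (cases "c \<in> C")
    case False then show ?thesis using FA_P_zero fa by metis
  next
    case True
    then obtain d where d: "d @ c \<in> VC" using reach by blast
    have ne: "c \<noteq> []" using True by (simp add: codes_def)
    have "\<mu>1 c = z ^ length d * \<mu>1 (d @ c)" "\<mu>2 c = z ^ length d * \<mu>2 (d @ c)"
      using eig_drop[OF assms(1) VC_C[OF d], of "length d"] eig_drop[OF assms(2) VC_C[OF d], of "length d"] ne
      by auto
    moreover have "\<mu>1 (d @ c) = \<mu>2 (d @ c)" using Res(2)[OF fa(1)] Res(2)[OF fa(2)] eq d by metis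
    ultimately show ?thesis by simp
  qed
qed

lemma Res_lin: assumes "\<mu> \<in> eigenspace_P adj z" "\<mu>' \<in> eigenspace_P adj z"
  shows "Res adj v0 (\<lambda>c. a * \<mu> c + b * \<mu>' c) = (\<lambda>A. a * Res adj v0 \<mu> A + b * Res adj v0 \<mu>' A)"
proof (rule Res_eq)
  have fa: "\<mu> \<in> FA_P adj" "\<mu>' \<in> FA_P adj" using assms eig_iff by blast+
  show "(\<lambda>A. a * Res adj v0 \<mu> A + b * Res adj v0 \<mu>' A) \<in> FA_bd adj v0"
    using FA_bd_lin Res(1) fa by blast
  show "\<forall>c\<in>VC. a * Res adj v0 \<mu> (P c) + b * Res adj v0 \<mu>' (P c) = a * \<mu> c + b * \<mu>' c"
    using Res(2) fa by simp
qed

definition "Ext M c = {c' \<in> C. length c' = M \<and> take (length c) c' = c}"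

lemma FA_bd_Ext:
  assumes nu: "\<nu> \<in> FA_bd adj v0" and dc: "d @ c \<in> VC" and cC: "c \<in> C" and M: "length c \<le> M"
  shows "\<nu> (P (d @ c)) = (\<Sum>c'\<in>Ext M c. \<nu> (P (d @ c')))"
    "\<And>c'. c' \<in> Ext M c \<Longrightarrow> d @ c' \<in> VC"
proof -
  have cne: "c \<noteq> []" using cC by (simp add: codes_def)
  have dcC: "d @ c \<in> C" using dc VC_C by blast
  show dV: "d @ c' \<in> VC" if c': "c' \<in> Ext M c" for c'
  proof -
    have c'C: "c' \<in> C" "take (length c) c' = c" using c' by (auto simp: Ext_def)
    have c'ne: "c' \<noteq> []" using c'C by (simp add: codes_def)
    have "hd (take (length c) c') = hd c'" using cne c'ne by (simp add: hd_take)
    then have hd: "hd c' = hd c" using c'C(2) by simp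
    have "d @ c' \<in> C"
    proof (cases "d = []")
      case True then show ?thesis using c'C by simp
    next
      case False
      then have "trn (last d) (hd c)" using codes_append_D[OF dcC False cne] by simp
      then show ?thesis using codes_append[of d c'] codes_append_D[OF dcC False cne] c'C hd by simp
    qed
    moreover have "fst (hd (d @ c')) = v0" using dc hd cne c'ne by (cases d) (auto simp: VC_def)
    ultimately show ?thesis by (simp add: VC_def)
  qed
  have lev: "lev (length d + M) (P (d @ c)) = (\<lambda>c'. d @ c') ` Ext M c"
  proof
    show "lev (length d + M) (P (d @ c)) \<subseteq> (\<lambda>c'. d @ c') ` Ext M c"
    proof
      fix x assume "x \<in> lev (length d + M) (P (d @ c))"
      then have x: "x \<in> VC" "length x = length d + M" "P x \<subseteq> P (d @ c)" by (auto simp: lev_def)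
      then have tk: "take (length (d @ c)) x = d @ c" using district_sub_iff[OF dcC VC_C[OF x(1)]] M by simp
      have "take (length d) x = d" using arg_cong[OF tk, of "take (length d)"] by (simp add: min_def)
      then have xd: "x = d @ drop (length d) x" by (metis append_take_drop_id)
      have "0 < M" using cne M by (cases c) auto
      then have "drop (length d) x \<in> C" using codes_drop[OF VC_C[OF x(1)], of "length d"] x(2) by simp
      moreover have "take (length c) (drop (length d) x) = c"
      proof -
        have "take (length c) (drop (length d) x) = drop (length d) (take (length c + length d) x)" by (simp add: take_drop)
        also have "\<dots> = drop (length d) (d @ c)" using tk by (simp add: add.commute)
        finally show ?thesis by simp
      qed
      ultimately have "drop (length d) x \<in> Ext M c" using x(2) by (simp add: Ext_def)
      then show "x \<in> (\<lambda>c'. d @ c') ` Ext M c" using xd by blast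
    qed
    show "(\<lambda>c'. d @ c') ` Ext M c \<subseteq> lev (length d + M) (P (d @ c))"
    proof clarify
      fix c' assume c': "c' \<in> Ext M c"
      then have V: "d @ c' \<in> VC" using dV by blast
      have "take (length (d @ c)) (d @ c') = d @ c" using c' by (simp add: Ext_def)
      then have "P (d @ c') \<subseteq> P (d @ c)" using district_sub_iff[OF dcC VC_C[OF V]] c' M by (simp add: Ext_def)
      then show "d @ c' \<in> lev (length d + M) (P (d @ c))" using V c' by (simp add: lev_def Ext_def)
    qed
  qed
  have meas: "meas (length d + M) (P (d @ c))" using meas_mono[OF meas_district(1)[OF dc]] M by simp
  have "\<nu> (P (d @ c)) = (\<Sum>x\<in>lev (length d + M) (P (d @ c)). \<nu> (P x))" using FA_bd_sum[OF nu meas] .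
  also have "\<dots> = (\<Sum>c'\<in>Ext M c. \<nu> (P (d @ c')))" unfolding lev by (simp add: sum.reindex inj_on_def)
  finally show "\<nu> (P (d @ c)) = (\<Sum>c'\<in>Ext M c. \<nu> (P (d @ c')))" .
qed

lemma FA_bd_succ:
  assumes nu: "\<nu> \<in> FA_bd adj v0" and c: "c \<in> VC"
  shows "\<nu> (P c) = (\<Sum>e\<in>{e. trn (last c) e}. \<nu> (P (c @ [e])))"
proof -
  have m: "meas (length c) (P c)" and l: "lev (length c) (P c) = {c}" using meas_district[OF c] by auto
  have "\<nu> (P c) = (\<Sum>x\<in>lev (Suc (length c)) (P c). \<nu> (P x))"
    using FA_bd_sum[OF nu meas_mono[OF m, of "Suc (length c)"]] by simp
  also have "lev (Suc (length c)) (P c) = (\<lambda>e. c @ [e]) ` {e. trn (last c) e}"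
    unfolding lev_Suc[OF m] l by auto
  also have "(\<Sum>x\<in>(\<lambda>e. c @ [e]) ` {e. trn (last c) e}. \<nu> (P x)) = (\<Sum>e\<in>{e. trn (last c) e}. \<nu> (P (c @ [e])))"
    by (simp add: sum.reindex inj_on_def)
  finally show ?thesis .
qed

end



context G begin

lemma code_prefix_facts: assumes "d @ c \<in> VC" "d \<noteq> []" "c \<noteq> []"
  shows "d \<in> C" "trn (last d) (hd c)" "fst (hd d) = v0" "snd (last d) = fst (hd c)"
proof -
  have dc: "d @ c \<in> C" using assms VC_C by blast
  show "d \<in> C" "trn (last d) (hd c)" using codes_append_D[OF dc assms(2,3)] by auto
  then show "snd (last d) = fst (hd c)" by (simp add: turn_def)
  show "fst (hd d) = v0" using assms by (simp add: VC_def)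
qed

lemma base_case:
  assumes nu: "\<nu> \<in> FA_bd_inv adj v0 z" and z: "z \<noteq> 0"
    and v1: "d1 @ c \<in> VC" and v2: "d2 @ c \<in> VC" and cC: "c \<in> C"
    and lt: "length d1 + length d2 < length c"
    and cond: "d1 = [] \<or> d2 = [] \<or> last d1 \<noteq> last d2"
  shows "z ^ length d1 * \<nu> (P (d1 @ c)) = z ^ length d2 * \<nu> (P (d2 @ c))"
proof (cases "d1 = [] \<and> d2 = []")
  case True then show ?thesis by simp
next
  case False
  have cne: "c \<noteq> []" using cC by (simp add: codes_def)
  have nuFA: "\<nu> \<in> FA_bd adj v0" and einv: "\<And>g. g \<in> Gamma adj v0 \<Longrightarrow> pi_z adj v0 z g \<nu> = \<nu>"
    using nu by (auto simp: FA_bd_inv_def)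
  define g where "g = d2 @ einv d1"
  have gne: "g \<noteq> []" using False by (auto simp: g_def einv_def)
  have c0: "d = [] \<Longrightarrow> d @ c \<in> VC \<Longrightarrow> fst (hd c) = v0" for d by (simp add: VC_def)
  have gfacts: "g \<in> C \<and> fst (hd g) = v0 \<and> snd (last g) = v0"
  proof (cases "d1 = []")
    case True
    then have d2ne: "d2 \<noteq> []" using False by simp
    have "g = d2" using True by (simp add: g_def)
    then show ?thesis using code_prefix_facts[OF v2 d2ne cne] c0[OF True v1] by simp
  next
    case d1ne: False
    have f1: "d1 \<in> C" "trn (last d1) (hd c)" "fst (hd d1) = v0" "snd (last d1) = fst (hd c)"
      using code_prefix_facts[OF v1 d1ne cne] by auto
    have hi: "hd (einv d1) = rev_edge (last d1)" "last (einv d1) = rev_edge (hd d1)"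
      using d1ne by (simp_all add: einv_def hd_rev last_rev hd_map last_map)
    have iC: "einv d1 \<in> C" using codes_inv f1 by blast
    show ?thesis
    proof (cases "d2 = []")
      case True
      then have "g = einv d1" by (simp add: g_def)
      then show ?thesis using iC hi f1 c0[OF True v2] by simp
    next
      case d2ne: False
      have f2: "d2 \<in> C" "trn (last d2) (hd c)" "fst (hd d2) = v0" "snd (last d2) = fst (hd c)"
        using code_prefix_facts[OF v2 d2ne cne] by auto
      have ll: "last d1 \<noteq> last d2" using cond d1ne d2ne by simp
      have "trn (last d2) (hd (einv d1))"
        using f1 f2 ll hi turn_E rev_E unfolding turn_def by (metis rev_edge_fst rev_edge_rev_edge)
      then have "g \<in> C" using codes_append[OF f2(1) iC] by (simp add: g_def)
      moreover have "hd g = hd d2" "last g = last (einv d1)" using d2ne d1ne by (simp_all add: g_def einv_def)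
      ultimately show ?thesis using f2 hi f1 by simp
    qed
  qed
  have gG: "g \<in> Gamma adj v0" using gfacts by (simp add: Gamma_def tree_verts_def)
  let ?x = "d2 @ c"
  have lg: "length g = length d1 + length d2" by (simp add: g_def)
  have ltx: "length g < length ?x" using lg lt by simp
  have jj: "jj g ?x = length d2" unfolding jj_def
  proof (rule lcpr_eqI)
    show "length d2 \<le> length g" "length d2 \<le> length ?x" using lg by auto
    show "g ! i = ?x ! i" if "i < length d2" for i using that by (simp add: g_def nth_append)
    show "g ! length d2 \<noteq> ?x ! length d2" if "length d2 < length g" "length d2 < length ?x"
    proof -
      have d1ne: "d1 \<noteq> []" using that lg by auto
      have "g ! length d2 = rev_edge (last d1)" using d1ne by (simp add: g_def nth_append einv_nth last_conv_nth)
      moreover have "?x ! length d2 = hd c" using cne by (simp add: nth_append hd_conv_nth)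
      moreover have "trn (last d1) (hd c)" using code_prefix_facts[OF v1 d1ne cne] by simp
      then have "hd c \<noteq> rev_edge (last d1)" by (simp add: turn_def)
      ultimately show ?thesis by simp
    qed
  qed
  have yy: "yy g ?x = d1 @ c" unfolding yy_def jj by (simp add: g_def)
  have "\<nu> (P ?x) = pi_z adj v0 z g \<nu> (P ?x)" using einv[OF gG] by simp
  also have "\<dots> = z powi (int (length g) - 2 * int (length d2)) * \<nu> (P (d1 @ c))"
    using pi_z_district[OF nuFA gG v2 ltx] jj yy by simp
  also have "z powi (int (length g) - 2 * int (length d2)) = z ^ length d1 / z ^ length d2"
    using powi_split[OF z, of "length d2" "length g"] lg by simp
  finally have "\<nu> (P ?x) = z ^ length d1 / z ^ length d2 * \<nu> (P (d1 @ c))" .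
  then show ?thesis using z by (simp add: field_simps)
qed

lemma base_ext:
  assumes nu: "\<nu> \<in> FA_bd_inv adj v0 z" and z: "z \<noteq> 0"
    and v1: "d1 @ c \<in> VC" and v2: "d2 @ c \<in> VC" and cC: "c \<in> C"
    and cond: "d1 = [] \<or> d2 = [] \<or> last d1 \<noteq> last d2"
  shows "z ^ length d1 * \<nu> (P (d1 @ c)) = z ^ length d2 * \<nu> (P (d2 @ c))"
proof -
  have nuFA: "\<nu> \<in> FA_bd adj v0" using nu by (simp add: FA_bd_inv_def)
  define M where "M = length c + length d1 + length d2 + 1"
  have M: "length c \<le> M" by (simp add: M_def)
  have "z ^ length d1 * \<nu> (P (d1 @ c)) = (\<Sum>c'\<in>Ext M c. z ^ length d1 * \<nu> (P (d1 @ c')))"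
    using FA_bd_Ext(1)[OF nuFA v1 cC M] by (simp add: sum_distrib_left)
  also have "\<dots> = (\<Sum>c'\<in>Ext M c. z ^ length d2 * \<nu> (P (d2 @ c')))"
  proof (rule sum.cong)
    fix c' assume c': "c' \<in> Ext M c"
    show "z ^ length d1 * \<nu> (P (d1 @ c')) = z ^ length d2 * \<nu> (P (d2 @ c'))"
    proof (rule base_case[OF nu z])
      show "d1 @ c' \<in> VC" using FA_bd_Ext(2)[OF nuFA v1 cC M c'] .
      show "d2 @ c' \<in> VC" using FA_bd_Ext(2)[OF nuFA v2 cC M c'] .
      show "c' \<in> C" "length d1 + length d2 < length c'" using c' by (auto simp: Ext_def M_def)
      show "d1 = [] \<or> d2 = [] \<or> last d1 \<noteq> last d2" by (rule cond)
    qed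
  qed simp
  also have "\<dots> = z ^ length d2 * \<nu> (P (d2 @ c))"
    using FA_bd_Ext(1)[OF nuFA v2 cC M] by (simp add: sum_distrib_left)
  finally show ?thesis .
qed

lemma well:
  assumes nu: "\<nu> \<in> FA_bd_inv adj v0 z" and z: "z \<noteq> 0"
  shows "c \<in> C \<Longrightarrow> d1 @ c \<in> VC \<Longrightarrow> d2 @ c \<in> VC \<Longrightarrow>
    z ^ length d1 * \<nu> (P (d1 @ c)) = z ^ length d2 * \<nu> (P (d2 @ c))"
proof (induction d1 arbitrary: d2 c rule: rev_induct)
  case Nil then show ?case using base_ext[OF nu z, of "[]" c d2] by simp
next
  case (snoc e d1')
  show ?case
  proof (cases "d2 \<noteq> [] \<and> last d2 = e")
    case True
    define d2' where "d2' = butlast d2"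
    have d2: "d2 = d2' @ [e]" using True append_butlast_last_id[of d2] by (simp add: d2'_def)
    have ec: "e # c \<in> C"
    proof -
      have "(d1' @ [e]) @ c \<in> C" using snoc.prems VC_C by blast
      then have "drop (length d1') ((d1' @ [e]) @ c) \<in> C" by (rule codes_drop) simp
      then show ?thesis by simp
    qed
    have a1: "d1' @ (e # c) \<in> VC" using snoc.prems(2) by simp
    have a2: "d2' @ (e # c) \<in> VC" using snoc.prems(3) d2 by simp
    have "z ^ length d1' * \<nu> (P (d1' @ (e # c))) = z ^ length d2' * \<nu> (P (d2' @ (e # c)))"
      using snoc.IH[OF ec a1 a2] .
    then have "z * (z ^ length d1' * \<nu> (P (d1' @ (e # c)))) = z * (z ^ length d2' * \<nu> (P (d2' @ (e # c))))" by simp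
    then show ?thesis using d2 by (simp add: mult.assoc)
  next
    case False
    then have "d1' @ [e] = [] \<or> d2 = [] \<or> last (d1' @ [e]) \<noteq> last d2" by auto
    from base_ext[OF nu z snoc.prems(2) snoc.prems(3) snoc.prems(1) this] show ?thesis .
  qed
qed

lemma Res_surj:
  assumes nu: "\<nu> \<in> FA_bd_inv adj v0 z" and z: "z \<noteq> 0"
  shows "\<exists>\<mu>\<in>eigenspace_P adj z. Res adj v0 \<mu> = \<nu>"
proof -
  have nuFA: "\<nu> \<in> FA_bd adj v0" using nu by (simp add: FA_bd_inv_def)
  define dd where "dd c = (SOME d. d @ c \<in> VC)" for c
  define \<mu> where "\<mu> c = (if c \<in> C then z ^ length (dd c) * \<nu> (P (dd c @ c)) else 0)" for c
  have mval: "\<mu> c = z ^ length d * \<nu> (P (d @ c))" if "c \<in> C" "d @ c \<in> VC" for c d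
  proof -
    have "dd c @ c \<in> VC" unfolding dd_def using reach[OF that(1)] by (rule someI_ex)
    then show ?thesis using well[OF nu z that(1) _ that(2)] that(1) by (simp add: \<mu>_def)
  qed
  have fa: "\<mu> \<in> FA_P adj" unfolding FA_P_def
  proof (intro CollectI conjI allI impI ballI)
    fix c assume "c \<notin> C" then show "\<mu> c = 0" by (simp add: \<mu>_def)
  next
    fix c assume c: "c \<in> C"
    obtain d where d: "d @ c \<in> VC" using reach[OF c] by blast
    have cne: "c \<noteq> []" using c by (simp add: codes_def)
    have "\<mu> c = z ^ length d * \<nu> (P (d @ c))" using mval[OF c d] .
    also have "\<dots> = z ^ length d * (\<Sum>e\<in>{e. trn (last c) e}. \<nu> (P (d @ c @ [e])))"
      using FA_bd_succ[OF nuFA d] cne by simp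
    also have "\<dots> = (\<Sum>e\<in>{e. trn (last c) e}. \<mu> (c @ [e]))"
      unfolding sum_distrib_left
    proof (rule sum.cong)
      fix e assume e: "e \<in> {e. trn (last c) e}"
      have ce: "c @ [e] \<in> C" using codes_snoc c e by blast
      have "(d @ c) @ [e] \<in> C" using codes_snoc[OF VC_C[OF d]] e cne by simp
      then have "d @ (c @ [e]) \<in> VC" using d cne by (cases d) (auto simp: VC_def)
      then show "z ^ length d * \<nu> (P (d @ c @ [e])) = \<mu> (c @ [e])" using mval[OF ce] by simp
    qed simp
    finally show "\<mu> c = (\<Sum>e\<in>{e. trn (last c) e}. \<mu> (c @ [e]))" .
  qed
  have ev: "\<forall>c\<in>C. 2 \<le> length c \<longrightarrow> \<mu> (tl c) = z * \<mu> c"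
  proof (intro ballI impI)
    fix c assume c: "c \<in> C" and l: "2 \<le> length c"
    obtain d where d: "d @ c \<in> VC" using reach[OF c] by blast
    have tC: "tl c \<in> C" using codes_tl c l by blast
    have cne: "c \<noteq> []" using c by (simp add: codes_def)
    have "(d @ [hd c]) @ tl c = d @ c" using cne by simp
    then have "\<mu> (tl c) = z ^ length (d @ [hd c]) * \<nu> (P (d @ c))" using mval[OF tC, of "d @ [hd c]"] d by simp
    then show "\<mu> (tl c) = z * \<mu> c" using mval[OF c d] by simp
  qed
  have mu: "\<mu> \<in> eigenspace_P adj z" using eig_iff fa ev by blast
  have "Res adj v0 \<mu> = \<nu>"
  proof (rule Res_eq[OF nuFA])
    show "\<forall>c\<in>VC. \<nu> (P c) = \<mu> c" using mval[of _ "[]"] VC_C by simp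
  qed
  then show ?thesis using mu by blast
qed

theorem main_G:
  assumes z: "z \<noteq> 0"
  shows "bij_betw (Res adj v0) (eigenspace_P adj z) (FA_bd_inv adj v0 z) \<and>
    (\<forall>\<mu>\<in>eigenspace_P adj z. \<forall>\<mu>'\<in>eigenspace_P adj z. \<forall>a b.
       Res adj v0 (\<lambda>c. a * \<mu> c + b * \<mu>' c) = (\<lambda>A. a * Res adj v0 \<mu> A + b * Res adj v0 \<mu>' A))"
proof (intro conjI ballI allI)
  show "bij_betw (Res adj v0) (eigenspace_P adj z) (FA_bd_inv adj v0 z)"
    unfolding bij_betw_def
  proof
    show "inj_on (Res adj v0) (eigenspace_P adj z)" unfolding inj_on_def using Res_inj by blast
    show "Res adj v0 ` eigenspace_P adj z = FA_bd_inv adj v0 z"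
      using Res_into[OF z] Res_surj[OF _ z] by blast
  qed
next
  fix \<mu> \<mu>' a b assume "\<mu> \<in> eigenspace_P adj z" "\<mu>' \<in> eigenspace_P adj z"
  then show "Res adj v0 (\<lambda>c. a * \<mu> c + b * \<mu>' c) = (\<lambda>A. a * Res adj v0 \<mu> A + b * Res adj v0 \<mu>' A)"
    by (rule Res_lin)
qed

end

theorem mainTheorem19:
  fixes V :: "'v set" and adj :: "'v \<Rightarrow> 'v \<Rightarrow> bool" and v0 :: 'v and z :: complex
  assumes "finite V"
    and "\<forall>u v. adj u v \<longrightarrow> u \<in> V \<and> v \<in> V"
    and "\<forall>u v. adj u v \<longrightarrow> adj v u"
    and "\<forall>u. \<not> adj u u"
    and "\<forall>u\<in>V. \<forall>v\<in>V. (u, v) \<in> {(a, b). adj a b}\<^sup>*"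
    and "\<forall>v\<in>V. card {w. adj v w} \<ge> 2"
    and "v0 \<in> V"
    and "z \<noteq> 0"
  shows "bij_betw (Res adj v0) (eigenspace_P adj z) (FA_bd_inv adj v0 z) \<and>
    (\<forall>\<mu>\<in>eigenspace_P adj z. \<forall>\<mu>'\<in>eigenspace_P adj z. \<forall>a b.
       Res adj v0 (\<lambda>c. a * \<mu> c + b * \<mu>' c) = (\<lambda>A. a * Res adj v0 \<mu> A + b * Res adj v0 \<mu>' A))"
proof -
  interpret G V adj v0 using assms(1-7) by (simp add: G_def)
  show ?thesis using main_G[OF assms(8)] .
qed

end
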